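(* Let $R$ be a complete discrete valuation ring of characteristic $p>0$ with uniformizer $\pi$, field of fractions $K$, and normalized valuation $v_K$. Let $H$ be a primitively generated $K$-Hopf algebra of rank $p^2$, $t_1,t_2$ a $K$-basis of $\mathrm{Prim}(H)$ with associated matrix $B$. Let \[\Theta=\begin{pmatrix}\pi^i&0\\ \theta&\pi^j\end{pmatrix},\qquad \Theta'=\begin{pmatrix}\pi^{i'}&0\\ \theta'&\pi^{j'}\end{pmatrix},\] with $i,j,i',j'\in\mathbb{Z}$, $\theta,\theta'\in K$, $v_K(\theta)\le j$, $v_K(\theta')\le j'$, and suppose $\Theta^{-1}B\Theta^{(p)}$ and $\Theta'^{-1}B\Theta'^{(p)}$ both lie in $M_2(R)$. Then $\Theta$ and $\Theta'$ give the same Hopf order, i.e. $R[\pi^it_1+\theta t_2,\ \pi^jt_2]=R[\pi^{i'}t_1+\theta' t_2,\ \pi^{j'}t_2]$ as subalgebras of $H$, if and only if $i=i'$, $j=j'$, and $v_K(\theta-\theta')\ge j$.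
   Context: $\Theta^{(p)}$ denotes the matrix obtained by raising each entry of $\Theta$ to the $p$-th power. $t$ is primitive if $\Delta(t)=t\otimes1+1\otimes t$; $\mathrm{Prim}(H)$ is the module of primitives; $H$ is primitively generated if generated as an algebra by its primitives. The associated matrix $B=(b_{j,i})$ is defined by $t_i^p=\sum_j b_{j,i}t_j$. When $\Theta=(\theta_{j,i})\in\mathrm{GL}_2(K)$ satisfies $\Theta^{-1}B\Theta^{(p)}\in M_2(R)$, the Hopf order given by $\Theta$ is the $R$-subalgebra $R[\theta_{1,1}t_1+\theta_{2,1}t_2,\ \theta_{1,2}t_1+\theta_{2,2}t_2]$ of $H$, which is an $R$-Hopf order in $H$ (a finitely generated projective $R$-submodule that is an $R$-Hopf algebra under the inherited operations and spans $H$ over $K$). *)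

theory Defs
  imports "HOL-Analysis.Finite_Cartesian_Product" "HOL-Computational_Algebra.Primes"
begin

text \<open>A normalized discrete valuation on a field K is modelled by v :: K => int on the
nonzero elements (the value of v at 0 is irrelevant; v(0) = +infinity is encoded by the
predicates vK_ge and vK_le below).\<close>

definition vK_ge :: "('k::field \<Rightarrow> int) \<Rightarrow> 'k \<Rightarrow> int \<Rightarrow> bool" where
  "vK_ge v x n \<longleftrightarrow> x = 0 \<or> n \<le> v x"

definition vK_le :: "('k::field \<Rightarrow> int) \<Rightarrow> 'k \<Rightarrow> int \<Rightarrow> bool" where
  "vK_le v x n \<longleftrightarrow> x \<noteq> 0 \<and> v x \<le> n"

definition normalized_discrete_valuation :: "('k::field \<Rightarrow> int) \<Rightarrow> bool" where
  "normalized_discrete_valuation v \<longleftrightarrow>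
     (\<forall>x y. x \<noteq> 0 \<longrightarrow> y \<noteq> 0 \<longrightarrow> v (x * y) = v x + v y) \<and>
     (\<forall>x y. x \<noteq> 0 \<longrightarrow> y \<noteq> 0 \<longrightarrow> x + y \<noteq> 0 \<longrightarrow> min (v x) (v y) \<le> v (x + y)) \<and>
     (\<exists>x. x \<noteq> 0 \<and> v x = 1)"

definition valuation_complete :: "('k::field \<Rightarrow> int) \<Rightarrow> bool" where
  "valuation_complete v \<longleftrightarrow>
     (\<forall>s :: nat \<Rightarrow> 'k.
        (\<forall>n. \<exists>N. \<forall>m\<ge>N. \<forall>m'\<ge>N. vK_ge v (s m - s m') n) \<longrightarrow>
        (\<exists>L. \<forall>n. \<exists>N. \<forall>m\<ge>N. vK_ge v (s m - L) n))"

definition val_ring :: "('k::field \<Rightarrow> int) \<Rightarrow> 'k set" where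
  "val_ring v = {x. vK_ge v x 0}"

text \<open>A K-algebra structure on the ring 'h is given by its structure map phi : K -> H
(a unital ring homomorphism into the centre); scalar multiplication is c.x = phi c * x.\<close>
definition K_algebra :: "('k::field \<Rightarrow> 'h::ring_1) \<Rightarrow> bool" where
  "K_algebra \<phi> \<longleftrightarrow> \<phi> 1 = 1 \<and> (\<forall>a b. \<phi> (a + b) = \<phi> a + \<phi> b) \<and>
     (\<forall>a b. \<phi> (a * b) = \<phi> a * \<phi> b) \<and> (\<forall>a x. \<phi> a * x = x * \<phi> a)"

definition K_linear_form :: "('k::field \<Rightarrow> 'h::ring_1) \<Rightarrow> ('h \<Rightarrow> 'k) \<Rightarrow> bool" where
  "K_linear_form \<phi> f \<longleftrightarrow> (\<forall>x y. f (x + y) = f x + f y) \<and> (\<forall>c x. f (\<phi> c * x) = c * f x)"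

definition K_bilinear_form :: "('k::field \<Rightarrow> 'h::ring_1) \<Rightarrow> ('h \<Rightarrow> 'h \<Rightarrow> 'k) \<Rightarrow> bool" where
  "K_bilinear_form \<phi> f \<longleftrightarrow> (\<forall>y. K_linear_form \<phi> (\<lambda>x. f x y)) \<and> (\<forall>x. K_linear_form \<phi> (f x))"

definition K_trilinear_form :: "('k::field \<Rightarrow> 'h::ring_1) \<Rightarrow> ('h \<Rightarrow> 'h \<Rightarrow> 'h \<Rightarrow> 'k) \<Rightarrow> bool" where
  "K_trilinear_form \<phi> f \<longleftrightarrow> (\<forall>y z. K_linear_form \<phi> (\<lambda>x. f x y z)) \<and>
     (\<forall>x z. K_linear_form \<phi> (\<lambda>y. f x y z)) \<and> (\<forall>x y. K_linear_form \<phi> (f x y))"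

text \<open>An element of H (x)_K H is represented by a finite list of pairs (a_i,b_i), standing for
sum a_i (x) b_i. Two representatives denote the same tensor iff all K-bilinear forms agree
on them (linear functionals on V (x) W are exactly the bilinear forms, and they separate points).\<close>
definition tensor_eq :: "('k::field \<Rightarrow> 'h::ring_1) \<Rightarrow> ('h \<times> 'h) list \<Rightarrow> ('h \<times> 'h) list \<Rightarrow> bool" where
  "tensor_eq \<phi> xs ys \<longleftrightarrow> (\<forall>f. K_bilinear_form \<phi> f \<longrightarrow>
      (\<Sum>(a, b)\<leftarrow>xs. f a b) = (\<Sum>(a, b)\<leftarrow>ys. f a b))"

definition hopf_algebra ::
  "('k::field \<Rightarrow> 'h::ring_1) \<Rightarrow> ('h \<Rightarrow> ('h \<times> 'h) list) \<Rightarrow> ('h \<Rightarrow> 'k) \<Rightarrow> ('h \<Rightarrow> 'h) \<Rightarrow> bool" where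
  "hopf_algebra \<phi> \<Delta> \<epsilon> S \<longleftrightarrow>
     K_algebra \<phi> \<and>
     \<comment> \<open>Delta is K-linear\<close>
     (\<forall>x y. tensor_eq \<phi> (\<Delta> (x + y)) (\<Delta> x @ \<Delta> y)) \<and>
     (\<forall>c x. tensor_eq \<phi> (\<Delta> (\<phi> c * x)) (map (\<lambda>(a, b). (\<phi> c * a, b)) (\<Delta> x))) \<and>
     \<comment> \<open>Delta is an algebra map\<close>
     tensor_eq \<phi> (\<Delta> 1) [(1, 1)] \<and>
     (\<forall>x y. tensor_eq \<phi> (\<Delta> (x * y))
        (concat (map (\<lambda>(a, b). map (\<lambda>(c, d). (a * c, b * d)) (\<Delta> y)) (\<Delta> x)))) \<and>
     \<comment> \<open>coassociativity\<close>
     (\<forall>x g. K_trilinear_form \<phi> g \<longrightarrow>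
        (\<Sum>(a, b)\<leftarrow>\<Delta> x. \<Sum>(c, d)\<leftarrow>\<Delta> a. g c d b) =
        (\<Sum>(a, b)\<leftarrow>\<Delta> x. \<Sum>(c, d)\<leftarrow>\<Delta> b. g a c d)) \<and>
     \<comment> \<open>counit: K-linear algebra map with the counit axioms\<close>
     K_linear_form \<phi> \<epsilon> \<and> \<epsilon> 1 = 1 \<and> (\<forall>x y. \<epsilon> (x * y) = \<epsilon> x * \<epsilon> y) \<and>
     (\<forall>x. (\<Sum>(a, b)\<leftarrow>\<Delta> x. \<phi> (\<epsilon> a) * b) = x) \<and>
     (\<forall>x. (\<Sum>(a, b)\<leftarrow>\<Delta> x. a * \<phi> (\<epsilon> b)) = x) \<and>
     \<comment> \<open>antipode: K-linear with the antipode axioms\<close>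
     (\<forall>x y. S (x + y) = S x + S y) \<and> (\<forall>c x. S (\<phi> c * x) = \<phi> c * S x) \<and>
     (\<forall>x. (\<Sum>(a, b)\<leftarrow>\<Delta> x. S a * b) = \<phi> (\<epsilon> x)) \<and>
     (\<forall>x. (\<Sum>(a, b)\<leftarrow>\<Delta> x. a * S b) = \<phi> (\<epsilon> x))"

definition K_rank :: "('k::field \<Rightarrow> 'h::ring_1) \<Rightarrow> nat \<Rightarrow> bool" where
  "K_rank \<phi> n \<longleftrightarrow> (\<exists>e :: nat \<Rightarrow> 'h.
     (\<forall>x. \<exists>c. x = (\<Sum>k<n. \<phi> (c k) * e k)) \<and>
     (\<forall>c. (\<Sum>k<n. \<phi> (c k) * e k) = 0 \<longrightarrow> (\<forall>k<n. c k = 0)))"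

definition primitive :: "('k::field \<Rightarrow> 'h::ring_1) \<Rightarrow> ('h \<Rightarrow> ('h \<times> 'h) list) \<Rightarrow> 'h \<Rightarrow> bool" where
  "primitive \<phi> \<Delta> t \<longleftrightarrow> tensor_eq \<phi> (\<Delta> t) [(t, 1), (1, t)]"

definition Prim :: "('k::field \<Rightarrow> 'h::ring_1) \<Rightarrow> ('h \<Rightarrow> ('h \<times> 'h) list) \<Rightarrow> 'h set" where
  "Prim \<phi> \<Delta> = {t. primitive \<phi> \<Delta> t}"

text \<open>The subring of H generated by a set A (of scalars) and a set S of elements;
A = range phi gives the K-subalgebra generated by S, A = phi ` R the R-subalgebra R[S].\<close>
inductive_set subalg_gen :: "'h::ring_1 set \<Rightarrow> 'h set \<Rightarrow> 'h set" for A S where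
  base: "a \<in> A \<Longrightarrow> a \<in> subalg_gen A S"
| gen: "s \<in> S \<Longrightarrow> s \<in> subalg_gen A S"
| zero: "0 \<in> subalg_gen A S"
| one: "1 \<in> subalg_gen A S"
| add: "x \<in> subalg_gen A S \<Longrightarrow> y \<in> subalg_gen A S \<Longrightarrow> x + y \<in> subalg_gen A S"
| neg: "x \<in> subalg_gen A S \<Longrightarrow> - x \<in> subalg_gen A S"
| mult: "x \<in> subalg_gen A S \<Longrightarrow> y \<in> subalg_gen A S \<Longrightarrow> x * y \<in> subalg_gen A S"

definition primitively_generated :: "('k::field \<Rightarrow> 'h::ring_1) \<Rightarrow> ('h \<Rightarrow> ('h \<times> 'h) list) \<Rightarrow> bool" where
  "primitively_generated \<phi> \<Delta> \<longleftrightarrow> subalg_gen (range \<phi>) (Prim \<phi> \<Delta>) = UNIV"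

definition prim_basis :: "('k::field \<Rightarrow> 'h::ring_1) \<Rightarrow> ('h \<Rightarrow> ('h \<times> 'h) list) \<Rightarrow> 'h \<Rightarrow> 'h \<Rightarrow> bool" where
  "prim_basis \<phi> \<Delta> t1 t2 \<longleftrightarrow> t1 \<in> Prim \<phi> \<Delta> \<and> t2 \<in> Prim \<phi> \<Delta> \<and>
     (\<forall>a b. \<phi> a * t1 + \<phi> b * t2 = 0 \<longrightarrow> a = 0 \<and> b = 0) \<and>
     (\<forall>t\<in>Prim \<phi> \<Delta>. \<exists>a b. t = \<phi> a * t1 + \<phi> b * t2)"

text \<open>mat2 a b c d is the matrix with rows (a b) and (c d); entry (r,c) is M $ r $ c.\<close>
definition mat2 :: "'a \<Rightarrow> 'a \<Rightarrow> 'a \<Rightarrow> 'a \<Rightarrow> 'a ^ 2 ^ 2" where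
  "mat2 a b c d = (\<chi> r s. if r = 1 then (if s = 1 then a else b) else (if s = 1 then c else d))"

definition entrywise_pow :: "'a::semiring_1 ^ 2 ^ 2 \<Rightarrow> nat \<Rightarrow> 'a ^ 2 ^ 2" where
  "entrywise_pow M p = (\<chi> r s. (M $ r $ s) ^ p)"

definition in_M2 :: "'a set \<Rightarrow> 'a ^ 2 ^ 2 \<Rightarrow> bool" where
  "in_M2 A M \<longleftrightarrow> (\<forall>r s. M $ r $ s \<in> A)"

text \<open>The Hopf order given by Theta = (theta_{j,i}):
  R[theta_11 t1 + theta_21 t2, theta_12 t1 + theta_22 t2].\<close>
definition hopf_order_given_by ::
  "('k::field \<Rightarrow> 'h::ring_1) \<Rightarrow> 'k set \<Rightarrow> 'h \<Rightarrow> 'h \<Rightarrow> 'k ^ 2 ^ 2 \<Rightarrow> 'h set" where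
  "hopf_order_given_by \<phi> R t1 t2 \<Theta> = subalg_gen (\<phi> ` R)
     {\<phi> (\<Theta> $ 1 $ 1) * t1 + \<phi> (\<Theta> $ 2 $ 1) * t2, \<phi> (\<Theta> $ 1 $ 2) * t1 + \<phi> (\<Theta> $ 2 $ 2) * t2}"

end

theory Submission
  imports Defs "HOL-Analysis.Cartesian_Space"
begin

section \<open>2x2 matrices\<close>

lemma two_cases: fixes r :: 2 shows "r = 1 \<or> r = 2"
  using exhaust_2[of r] by blast

lemma UNIV_two: "(UNIV :: 2 set) = {1, 2}"
  using two_cases by auto

lemma mat2_nth [simp]:
  "mat2 a b c d $ 1 $ 1 = a" "mat2 a b c d $ 1 $ 2 = b"
  "mat2 a b c d $ 2 $ 1 = c" "mat2 a b c d $ 2 $ 2 = d"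
  by (simp_all add: mat2_def)

lemma mat2_eta: "(M :: 'a ^ 2 ^ 2) = mat2 (M$1$1) (M$1$2) (M$2$1) (M$2$2)"
proof -
  have "\<And>r s. M $ r $ s = mat2 (M$1$1) (M$1$2) (M$2$1) (M$2$2) $ r $ s"
  proof -
    fix r s :: 2
    show "M $ r $ s = mat2 (M$1$1) (M$1$2) (M$2$1) (M$2$2) $ r $ s"
      using two_cases[of r] two_cases[of s] by (elim disjE) simp_all
  qed
  then show ?thesis unfolding vec_eq_iff by blast
qed

lemma mat2_mult: "mat2 a b c d ** mat2 e f g h =
   mat2 (a*e+b*g) (a*f+b*h) (c*e+d*g) (c*f+d*h :: 'a::semiring_1)"
  apply (subst mat2_eta[of "mat2 a b c d ** mat2 e f g h"])
  by (simp add: matrix_matrix_mult_def UNIV_two)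

lemma mat2_eq_iff: "mat2 a b c d = mat2 a' b' c' d' \<longleftrightarrow> a = a' \<and> b = b' \<and> c = c' \<and> d = d'"
  by (metis mat2_nth)

lemma mat_one_2: "(mat 1 :: 'a::zero_neq_one ^2^2) = mat2 1 0 0 1"
  apply (subst mat2_eta[of "mat 1"]) by (simp add: mat_def)

lemma matrix_inv_unique:
  fixes M N :: "'a::semiring_1 ^ 'n ^ 'n"
  assumes "M ** N = mat 1" "N ** M = mat 1"
  shows "matrix_inv M = N"
proof -
  let ?I = "matrix_inv M"
  have ex: "\<exists>A'. M ** A' = mat 1 \<and> A' ** M = mat 1" using assms by blast
  have h: "M ** ?I = mat 1 \<and> ?I ** M = mat 1"
    unfolding matrix_inv_def by (rule someI_ex[OF ex])
  have "?I = ?I ** (M ** N)" using assms by simp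
  also have "\<dots> = (?I ** M) ** N" by (simp add: matrix_mul_assoc)
  also have "\<dots> = N" using h by simp
  finally show ?thesis .
qed

lemma matrix_inv_tri:
  fixes a c d :: "'a::field"
  assumes "a \<noteq> 0" "d \<noteq> 0"
  shows "matrix_inv (mat2 a 0 c d) = mat2 (1/a) 0 (- c/(a*d)) (1/d)"
proof (rule matrix_inv_unique)
  show "mat2 a 0 c d ** mat2 (1 / a) 0 (- c / (a * d)) (1 / d) = mat 1"
    using assms unfolding mat2_mult mat_one_2 mat2_eq_iff by (simp add: field_simps)
  show "mat2 (1 / a) 0 (- c / (a * d)) (1 / d) ** mat2 a 0 c d = mat 1"
    using assms unfolding mat2_mult mat_one_2 mat2_eq_iff by (simp add: field_simps)
qed

lemma entrywise_pow_mat2: "entrywise_pow (mat2 a b c d) p = mat2 (a^p) (b^p) (c^p) (d^p)"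
  apply (subst mat2_eta[of "entrywise_pow (mat2 a b c d) p"])
  by (simp add: entrywise_pow_def)

lemma in_M2_mat2: "in_M2 A (mat2 a b c d) \<longleftrightarrow> a \<in> A \<and> b \<in> A \<and> c \<in> A \<and> d \<in> A"
proof
  assume "in_M2 A (mat2 a b c d)"
  then show "a \<in> A \<and> b \<in> A \<and> c \<in> A \<and> d \<in> A" unfolding in_M2_def
    by (metis mat2_nth)
next
  assume h: "a \<in> A \<and> b \<in> A \<and> c \<in> A \<and> d \<in> A"
  show "in_M2 A (mat2 a b c d)" unfolding in_M2_def
  proof (intro allI)
    fix r s :: 2
    show "mat2 a b c d $ r $ s \<in> A"
      using two_cases[of r] two_cases[of s] h by (elim disjE) simp_all
  qed
qed


section \<open>Valuations\<close>

locale dval =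
  fixes v :: "'k::field \<Rightarrow> int"
  assumes ndv: "normalized_discrete_valuation v"
begin

lemma v_mult: "x \<noteq> 0 \<Longrightarrow> y \<noteq> 0 \<Longrightarrow> v (x * y) = v x + v y"
  using ndv unfolding normalized_discrete_valuation_def by blast

lemma v_add: "x \<noteq> 0 \<Longrightarrow> y \<noteq> 0 \<Longrightarrow> x + y \<noteq> 0 \<Longrightarrow> min (v x) (v y) \<le> v (x + y)"
  using ndv unfolding normalized_discrete_valuation_def by blast

lemma v_one: "v 1 = 0"
  using v_mult[of 1 1] by simp

lemma v_inverse: "x \<noteq> 0 \<Longrightarrow> v (inverse x) = - v x"
  using v_mult[of x "inverse x"] v_one by simp

lemma v_divide: "x \<noteq> 0 \<Longrightarrow> y \<noteq> 0 \<Longrightarrow> v (x / y) = v x - v y"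
  by (simp add: divide_inverse v_mult v_inverse)

lemma v_minus: "v (- x) = v x"
proof (cases "x = 0")
  case False
  have "v ((-x) * (-x)) = v (x * x)" by simp
  then show ?thesis using False v_mult[of "-x" "-x"] v_mult[of x x] by simp
qed simp

lemma v_power: "x \<noteq> 0 \<Longrightarrow> v (x ^ n) = int n * v x"
  by (induction n) (simp_all add: v_one v_mult algebra_simps)

lemma v_powi: "x \<noteq> 0 \<Longrightarrow> v (x powi k) = k * v x"
  by (cases "k \<ge> 0") (simp_all add: power_int_def v_power v_inverse)

lemma v_sub_strict:
  assumes "x \<noteq> 0" "y \<noteq> 0" "v x < v y"
  shows "x - y \<noteq> 0 \<and> v (x - y) = v x"
proof -
  have xy: "x - y \<noteq> 0" using assms by auto
  have "min (v (x - y)) (v y) \<le> v x"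
    using v_add[of "x - y" y] xy assms by simp
  then have "v (x - y) \<le> v x" using assms by linarith
  moreover have "min (v x) (v (-y)) \<le> v (x - y)"
    using v_add[of x "-y"] xy assms by simp
  then have "v x \<le> v (x - y)" using assms v_minus[of y] by linarith
  ultimately show ?thesis using xy by simp
qed

definition inR :: "'k \<Rightarrow> bool" where "inR x \<longleftrightarrow> x \<in> val_ring v"

lemma inR_iff: "inR x \<longleftrightarrow> x = 0 \<or> 0 \<le> v x"
  unfolding inR_def val_ring_def vK_ge_def by simp

lemma inR_0 [simp]: "inR 0" and inR_1 [simp]: "inR 1"
  by (simp_all add: inR_iff v_one)

lemma inR_mult: "inR x \<Longrightarrow> inR y \<Longrightarrow> inR (x * y)"
  unfolding inR_iff by (cases "x = 0"; cases "y = 0") (auto simp: v_mult)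

lemma inR_add: "inR x \<Longrightarrow> inR y \<Longrightarrow> inR (x + y)"
proof -
  assume a: "inR x" "inR y"
  show "inR (x + y)"
  proof (cases "x = 0 \<or> y = 0 \<or> x + y = 0")
    case True then show ?thesis using a by auto
  next
    case False
    then have "min (v x) (v y) \<le> v (x + y)" using v_add by blast
    then show ?thesis using a False unfolding inR_iff by linarith
  qed
qed

lemma inR_minus: "inR x \<Longrightarrow> inR (- x)"
  unfolding inR_iff by (simp add: v_minus)

lemma inR_diff: "inR x \<Longrightarrow> inR y \<Longrightarrow> inR (x - y)"
  using inR_add[of x "-y"] inR_minus by simp

lemma inR_power: "inR x \<Longrightarrow> inR (x ^ n)"
  by (induction n) (simp_all add: inR_mult)

lemma inR_of_power:
  assumes "inR (x ^ n)" "n \<ge> 1"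
  shows "inR x"
proof (cases "x = 0")
  case False
  then have "0 \<le> int n * v x" using assms v_power[of x n] unfolding inR_iff by simp
  then show ?thesis using assms(2) False unfolding inR_iff
    by (simp add: zero_le_mult_iff)
qed (simp add: inR_iff)

lemma val_ring_inR: "x \<in> val_ring v \<longleftrightarrow> inR x"
  by (simp add: inR_def)

lemma delta_lemma:
  assumes th: "\<theta> \<noteq> 0" "v \<theta> \<le> j" and d: "d \<noteq> 0" "v d = j"
    and b: "inR \<beta>" and p: "p \<ge> 2"
    and E: "inR (\<theta> / d * (\<delta> ^ (p - 1) - \<beta> ^ (p - 1)))"
  shows "inR \<delta>"
proof (rule ccontr)
  assume nd: "\<not> inR \<delta>"
  then have d0: "\<delta> \<noteq> 0" and vd: "v \<delta> < 0" by (auto simp: inR_iff)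
  have dp0: "\<delta> ^ (p - 1) \<noteq> 0" using d0 by simp
  have vdp: "v (\<delta> ^ (p - 1)) = int (p - 1) * v \<delta>" using v_power[OF d0] .
  have vdp2: "v (\<delta> ^ (p - 1)) \<le> v \<delta>" using vdp vd p
  proof -
    have "(1::int) \<le> int (p - 1)" using p by simp
    from mult_right_mono_neg[OF this, of "v \<delta>"] vd have "int (p - 1) * v \<delta> \<le> v \<delta>" by simp
    then show ?thesis using vdp by simp
  qed
  have X: "\<delta> ^ (p - 1) - \<beta> ^ (p - 1) \<noteq> 0 \<and> v (\<delta> ^ (p - 1) - \<beta> ^ (p - 1)) = v (\<delta> ^ (p - 1))"
  proof (cases "\<beta> = 0")
    case True
    then show ?thesis using dp0 p by (simp add: zero_power)
  next
    case False
    have "0 \<le> v (\<beta> ^ (p - 1))" using inR_power[OF b, of "p - 1"] False unfolding inR_iff by simp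
    then show ?thesis using v_sub_strict[OF dp0, of "\<beta> ^ (p - 1)"] False vdp2 vd by simp
  qed
  have "v (\<theta> / d * (\<delta> ^ (p - 1) - \<beta> ^ (p - 1))) = v \<theta> - j + v (\<delta> ^ (p - 1))"
    using X th d by (simp add: v_mult v_divide)
  also have "\<dots> < 0" using th vdp2 vd by linarith
  finally show False using E X th d unfolding inR_iff by simp
qed

end


section \<open>Binomial bookkeeping\<close>

lemma pascal_sum:
  fixes u :: "nat \<Rightarrow> nat \<Rightarrow> 'a::semiring_1"
  shows "(\<Sum>k\<le>n. of_nat (n choose k) * u (Suc k) (n - k)) + (\<Sum>k\<le>n. of_nat (n choose k) * u k (Suc n - k))
   = (\<Sum>k\<le>Suc n. of_nat (Suc n choose k) * u k (Suc n - k))"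
proof -
  have R: "(\<Sum>k\<le>Suc n. of_nat (Suc n choose k) * u k (Suc n - k)) =
     u 0 (Suc n) + (\<Sum>k\<le>n. of_nat (n choose k) * u (Suc k) (n - k))
       + (\<Sum>k\<le>n. of_nat (n choose Suc k) * u (Suc k) (n - k))"
    by (subst sum.atMost_Suc_shift) (simp add: distrib_right sum.distrib add.assoc del: sum.atMost_Suc)
  have "(\<Sum>k\<le>n. of_nat (n choose k) * u k (Suc n - k)) =
        (\<Sum>k\<le>Suc n. of_nat (n choose k) * u k (Suc n - k))"
    by (simp add: binomial_eq_0)
  also have "\<dots> = u 0 (Suc n) + (\<Sum>k\<le>n. of_nat (n choose Suc k) * u (Suc k) (n - k))"
    by (subst sum.atMost_Suc_shift) (simp del: sum.atMost_Suc)
  finally have L: "(\<Sum>k\<le>n. of_nat (n choose k) * u k (Suc n - k)) =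
     u 0 (Suc n) + (\<Sum>k\<le>n. of_nat (n choose Suc k) * u (Suc k) (n - k))" .
  show ?thesis unfolding R L by (simp add: algebra_simps)
qed

lemma prime_sum_middle:
  fixes u :: "nat \<Rightarrow> nat \<Rightarrow> 'a::semiring_1"
  assumes p: "prime p" and c: "of_nat p = (0::'a)"
  shows "(\<Sum>k\<le>p. of_nat (p choose k) * u k (p - k)) = u 0 p + u p 0"
proof -
  have p0: "p > 0" using p prime_gt_0_nat by blast
  have mid: "of_nat (p choose k) = (0::'a)" if "0 < k" "k < p" for k
  proof -
    have "p dvd p choose k" using dvd_choose_prime[of k p] that p by simp
    then obtain m where "p choose k = p * m" by blast
    then show ?thesis using c by simp
  qed
  have "(\<Sum>k\<le>p. of_nat (p choose k) * u k (p - k)) =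
        (\<Sum>k\<in>{0, p}. of_nat (p choose k) * u k (p - k))"
    by (rule sum.mono_neutral_right) (auto simp: mid)
  also have "\<dots> = u 0 p + u p 0" using p0 by simp
  finally show ?thesis .
qed


section \<open>The Hopf algebra setting\<close>

definition ev :: "('h \<Rightarrow> 'h \<Rightarrow> 'k::field) \<Rightarrow> ('h \<times> 'h) list \<Rightarrow> 'k" where
  "ev f xs = (\<Sum>(a, b)\<leftarrow>xs. f a b)"

lemma ev_Nil [simp]: "ev f [] = 0" and ev_Cons [simp]: "ev f ((a, b) # xs) = f a b + ev f xs"
  by (simp_all add: ev_def)

lemma ev_append [simp]: "ev f (xs @ ys) = ev f xs + ev f ys"
  by (simp add: ev_def)

lemma ev_cong: "(\<And>a b. f a b = g a b) \<Longrightarrow> ev f xs = ev g xs"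
  by (simp add: ev_def)

lemma ev_concat:
  "ev f (concat (map (\<lambda>(a, b). map (\<lambda>(c, d). (a * c, b * d)) ys) xs)) =
   ev (\<lambda>a b. ev (\<lambda>c d. f (a * c) (b * d)) ys) xs"
proof (induction xs)
  case (Cons x xs)
  obtain a b where x: "x = (a, b)" by (cases x)
  have "ev f (map (\<lambda>(c, d). (a * c, b * d)) ys) = ev (\<lambda>c d. f (a * c) (b * d)) ys"
    by (induction ys) auto
  then show ?case using Cons x by simp
qed simp

locale hset =
  fixes \<phi> :: "'k::field \<Rightarrow> 'h::ring_1" and \<Delta> :: "'h \<Rightarrow> ('h \<times> 'h) list"
    and \<epsilon> :: "'h \<Rightarrow> 'k" and S :: "'h \<Rightarrow> 'h" and p :: nat and t1 t2 :: 'h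
  assumes hopf: "hopf_algebra \<phi> \<Delta> \<epsilon> S" and prime: "prime p" and charp: "of_nat p = (0::'k)"
    and rank: "K_rank \<phi> (p ^ 2)" and pg: "primitively_generated \<phi> \<Delta>"
    and basis: "prim_basis \<phi> \<Delta> t1 t2"
begin

lemma Kalg: "K_algebra \<phi>" using hopf unfolding hopf_algebra_def by blast

lemma phi_one [simp]: "\<phi> 1 = 1" using Kalg unfolding K_algebra_def by blast
lemma phi_add [simp]: "\<phi> (a + b) = \<phi> a + \<phi> b" using Kalg unfolding K_algebra_def by blast
lemma phi_mult: "\<phi> (a * b) = \<phi> a * \<phi> b" using Kalg unfolding K_algebra_def by blast
lemma phi_central: "\<phi> a * x = x * \<phi> a" using Kalg unfolding K_algebra_def by blast

lemma phi_zero [simp]: "\<phi> 0 = 0"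
  using phi_add[of 0 0] by simp

lemma phi_minus [simp]: "\<phi> (- a) = - \<phi> a"
  using phi_add[of a "-a"] by (simp add: eq_neg_iff_add_eq_0 add.commute)

lemma phi_diff [simp]: "\<phi> (a - b) = \<phi> a - \<phi> b"
  using phi_add[of a "-b"] by simp

lemma phi_of_nat [simp]: "\<phi> (of_nat n) = of_nat n"
  by (induction n) simp_all

lemma phi_power: "\<phi> (a ^ n) = \<phi> a ^ n"
  by (induction n) (simp_all add: phi_mult)

lemma phi_eq0:
  assumes "\<phi> a = 0" shows "a = 0"
proof (rule ccontr)
  assume a: "a \<noteq> 0"
  then have "a * inverse a = 1" by simp
  then have "\<phi> (a * inverse a) = 1" by simp
  moreover have "\<phi> (a * inverse a) = 0" using assms by (simp add: phi_mult)
  ultimately show False by simp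
qed

lemma phi_inj: "\<phi> a = \<phi> b \<Longrightarrow> a = b"
  using phi_eq0[of "a - b"] by simp

lemma phi_mult_assoc: "\<phi> a * (\<phi> b * x) = \<phi> (a * b) * x"
  by (simp add: phi_mult mult.assoc)

lemma charH: "(of_nat p :: 'h) = 0"
  using phi_of_nat[of p] charp by simp

lemma p_ge2: "p \<ge> 2" using prime prime_ge_2_nat by blast

lemma mult_phi_left: "x * (\<phi> a * y) = \<phi> a * (x * y)"
  by (metis mult.assoc phi_central)

abbreviation bil where "bil f \<equiv> K_bilinear_form \<phi> f"

lemma bilD:
  assumes "bil f"
  shows "f (x + y) z = f x z + f y z" "f (\<phi> c * x) z = c * f x z"
    "f x (y + z) = f x y + f x z" "f x (\<phi> c * y) = c * f x y"
  using assms unfolding K_bilinear_form_def K_linear_form_def by blast+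

lemma bil_zero:
  assumes "bil f" shows "f 0 z = 0" "f z 0 = 0"
  using bilD(2)[OF assms, of 0 0 z] bilD(4)[OF assms, of z 0 0] by simp_all

lemma bil_minus:
  assumes "bil f" shows "f (- x) z = - f x z" "f z (- x) = - f z x"
  using bilD(2)[OF assms, of "-1" x z] bilD(4)[OF assms, of z "-1" x] by simp_all

lemma bil_diff:
  assumes "bil f" shows "f (x - y) z = f x z - f y z" "f z (x - y) = f z x - f z y"
  using bilD(1)[OF assms, of x "-y" z] bilD(3)[OF assms, of z x "-y"] bil_minus[OF assms]
  by simp_all

lemma bilI:
  assumes "\<And>x y z. f (x + y) z = f x z + f y z" "\<And>c x z. f (\<phi> c * x) z = c * f x z"
    "\<And>x y z. f x (y + z) = f x y + f x z" "\<And>c x y. f x (\<phi> c * y) = c * f x y"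
  shows "bil f"
  using assms unfolding K_bilinear_form_def K_linear_form_def by blast

lemma bil_compose:
  assumes "bil f"
  shows "bil (\<lambda>a b. f (u * a * c) (w * b * d))"
  using bilD[OF assms]
  by (intro bilI) (simp_all add: distrib_left distrib_right mult_phi_left mult.assoc)

lemma bil_lmult: "bil f \<Longrightarrow> bil (\<lambda>c d. f (a * c) (b * d))"
  using bil_compose[of f a 1 b 1] by simp

lemma bil_rmult: "bil f \<Longrightarrow> bil (\<lambda>a b. f (a * c) (b * d))"
  using bil_compose[of f 1 c 1 d] by simp

lemma bil_add: "bil f \<Longrightarrow> bil g \<Longrightarrow> bil (\<lambda>a b. f a b + g a b)"
  using bilD[of f] bilD[of g] by (intro bilI) (simp_all add: algebra_simps)

lemma bil_scale: "bil f \<Longrightarrow> bil (\<lambda>a b. k * f a b)"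
  using bilD[of f] by (intro bilI) (simp_all add: algebra_simps)

lemma bil_sum: "(\<And>k. bil (F k)) \<Longrightarrow> bil (\<lambda>a b. \<Sum>k\<le>(n::nat). F k a b)"
proof (induction n)
  case 0 then show ?case by simp
next
  case (Suc n)
  then show ?case using bil_add[of "\<lambda>a b. \<Sum>k\<le>n. F k a b" "F (Suc n)"] by simp
qed

lemma tensor_evD: "tensor_eq \<phi> xs ys \<Longrightarrow> bil f \<Longrightarrow> ev f xs = ev f ys"
  unfolding tensor_eq_def ev_def by blast

lemma H_add: "tensor_eq \<phi> (\<Delta> (x + y)) (\<Delta> x @ \<Delta> y)"
  using hopf unfolding hopf_algebra_def by blast
lemma H_one: "tensor_eq \<phi> (\<Delta> 1) [(1, 1)]"
  using hopf unfolding hopf_algebra_def by blast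
lemma H_mult: "tensor_eq \<phi> (\<Delta> (x * y))
        (concat (map (\<lambda>(a, b). map (\<lambda>(c, d). (a * c, b * d)) (\<Delta> y)) (\<Delta> x)))"
  using hopf unfolding hopf_algebra_def by blast

lemma ev_add: "bil f \<Longrightarrow> ev f (\<Delta> (x + y)) = ev f (\<Delta> x) + ev f (\<Delta> y)"
  using tensor_evD[OF H_add] by simp

lemma ev_map_smult: "bil f \<Longrightarrow> ev f (map (\<lambda>(a, b). (\<phi> c * a, b)) xs) = c * ev f xs"
  by (induction xs) (auto simp: bilD(2) algebra_simps)

lemma ev_smult: "bil f \<Longrightarrow> ev f (\<Delta> (\<phi> c * x)) = c * ev f (\<Delta> x)"
proof -
  assume f: "bil f"
  have "tensor_eq \<phi> (\<Delta> (\<phi> c * x)) (map (\<lambda>(a, b). (\<phi> c * a, b)) (\<Delta> x))"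
    using hopf unfolding hopf_algebra_def by blast
  then have "ev f (\<Delta> (\<phi> c * x)) = ev f (map (\<lambda>(a, b). (\<phi> c * a, b)) (\<Delta> x))"
    using tensor_evD f by blast
  also have "\<dots> = c * ev f (\<Delta> x)"
    using ev_map_smult[OF f] .
  finally show ?thesis .
qed

lemma ev_one: "bil f \<Longrightarrow> ev f (\<Delta> 1) = f 1 1"
  using tensor_evD[OF H_one] by simp

lemma ev_mult: "bil f \<Longrightarrow> ev f (\<Delta> (x * y)) = ev (\<lambda>a b. ev (\<lambda>c d. f (a * c) (b * d)) (\<Delta> y)) (\<Delta> x)"
  using tensor_evD[OF H_mult] ev_concat by metis

lemma prim_iff: "t \<in> Prim \<phi> \<Delta> \<longleftrightarrow> (\<forall>f. bil f \<longrightarrow> ev f (\<Delta> t) = f t 1 + f 1 t)"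
  unfolding Prim_def primitive_def tensor_eq_def ev_def by simp

lemma primD: "t \<in> Prim \<phi> \<Delta> \<Longrightarrow> bil f \<Longrightarrow> ev f (\<Delta> t) = f t 1 + f 1 t"
  using prim_iff by blast

lemma prim_add: "x \<in> Prim \<phi> \<Delta> \<Longrightarrow> y \<in> Prim \<phi> \<Delta> \<Longrightarrow> x + y \<in> Prim \<phi> \<Delta>"
  unfolding prim_iff by (simp add: ev_add bilD)

lemma prim_smult: "x \<in> Prim \<phi> \<Delta> \<Longrightarrow> \<phi> c * x \<in> Prim \<phi> \<Delta>"
  unfolding prim_iff by (simp add: ev_smult bilD distrib_left)

lemma prim_diff: "x \<in> Prim \<phi> \<Delta> \<Longrightarrow> y \<in> Prim \<phi> \<Delta> \<Longrightarrow> x - y \<in> Prim \<phi> \<Delta>"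
  using prim_add[of x "\<phi> (-1) * y"] prim_smult[of y "-1"] by simp

lemma prim_mult_ev:
  assumes x: "x \<in> Prim \<phi> \<Delta>" and y: "y \<in> Prim \<phi> \<Delta>" and f: "bil f"
  shows "ev f (\<Delta> (x * y)) = f (x * y) 1 + f x y + f y x + f 1 (x * y)"
proof -
  have "ev f (\<Delta> (x * y)) = ev (\<lambda>a b. ev (\<lambda>c d. f (a * c) (b * d)) (\<Delta> y)) (\<Delta> x)"
    using ev_mult[OF f] .
  also have "\<dots> = ev (\<lambda>a b. f (a * y) b + f a (b * y)) (\<Delta> x)"
    by (rule ev_cong) (simp add: primD[OF y bil_lmult[OF f]])
  also have "\<dots> = f (x * y) 1 + f x y + (f y x + f 1 (x * y))"
    using primD[OF x bil_add[OF bil_rmult[OF f, of y 1] bil_rmult[OF f, of 1 y]]] by simp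
  finally show ?thesis by (simp add: add.assoc)
qed

lemma prim_comm:
  assumes x: "x \<in> Prim \<phi> \<Delta>" and y: "y \<in> Prim \<phi> \<Delta>"
  shows "x * y - y * x \<in> Prim \<phi> \<Delta>"
  unfolding prim_iff
proof (intro allI impI)
  fix f assume f: "bil f"
  have "x * y - y * x = x * y + \<phi> (-1) * (y * x)" by simp
  then have "ev f (\<Delta> (x * y - y * x)) = ev f (\<Delta> (x * y)) - ev f (\<Delta> (y * x))"
    by (simp only: ev_add[OF f] ev_smult[OF f]) simp
  also have "\<dots> = f (x * y - y * x) 1 + f 1 (x * y - y * x)"
    using prim_mult_ev[OF x y f] prim_mult_ev[OF y x f] by (simp add: bil_diff[OF f])
  finally show "ev f (\<Delta> (x * y - y * x)) = f (x * y - y * x) 1 + f 1 (x * y - y * x)" .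
qed

lemma prim_pow_ev:
  assumes z: "z \<in> Prim \<phi> \<Delta>"
  shows "bil f \<Longrightarrow> ev f (\<Delta> (z ^ n)) = (\<Sum>k\<le>n. of_nat (n choose k) * f (z ^ k) (z ^ (n - k)))"
proof (induction n arbitrary: f)
  case 0
  then show ?case by (simp add: ev_one)
next
  case (Suc n)
  have f: "bil f" by fact
  have "ev f (\<Delta> (z ^ Suc n)) = ev (\<lambda>a b. ev (\<lambda>c d. f (a * c) (b * d)) (\<Delta> (z ^ n))) (\<Delta> z)"
    using ev_mult[OF f, of z "z ^ n"] by simp
  also have "\<dots> = ev (\<lambda>a b. \<Sum>k\<le>n. of_nat (n choose k) * f (a * z ^ k) (b * z ^ (n - k))) (\<Delta> z)"
    by (rule ev_cong) (simp add: Suc.IH[OF bil_lmult[OF f]])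
  also have "\<dots> = (\<Sum>k\<le>n. of_nat (n choose k) * f (z ^ Suc k) (z ^ (n - k)))
       + (\<Sum>k\<le>n. of_nat (n choose k) * f (z ^ k) (z ^ (Suc n - k)))"
  proof -
    have b: "bil (\<lambda>a b. \<Sum>k\<le>n. of_nat (n choose k) * f (a * z ^ k) (b * z ^ (n - k)))"
      by (rule bil_sum) (rule bil_scale[OF bil_rmult[OF f]])
    have e: "(\<Sum>k\<le>n. of_nat (n choose k) * f (z ^ k) (z * z ^ (n - k))) =
          (\<Sum>k\<le>n. of_nat (n choose k) * f (z ^ k) (z ^ (Suc n - k)))"
      by (rule sum.cong) (simp_all add: Suc_diff_le)
    show ?thesis using primD[OF z b] e by (simp add: power_commutes)
  qed
  also have "\<dots> = (\<Sum>k\<le>Suc n. of_nat (Suc n choose k) * f (z ^ k) (z ^ (Suc n - k)))"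
    using pascal_sum[of n "\<lambda>a b. f (z ^ a) (z ^ b)"] by simp
  finally show ?case .
qed

lemma prim_pow:
  assumes z: "z \<in> Prim \<phi> \<Delta>"
  shows "z ^ p \<in> Prim \<phi> \<Delta>"
  unfolding prim_iff
proof (intro allI impI)
  fix f assume f: "bil f"
  show "ev f (\<Delta> (z ^ p)) = f (z ^ p) 1 + f 1 (z ^ p)"
    using prim_pow_ev[OF z f, of p] prime_sum_middle[OF prime charp, of "\<lambda>a b. f (z ^ a) (z ^ b)"]
    by (simp add: add.commute)
qed

end


section \<open>Ring identities in characteristic p\<close>

lemma minus_one_power_commute: "(-1) ^ k * (x::'a::ring_1) = x * (-1) ^ k"
  by (induction k) (simp_all add: mult.assoc)

lemma ad_pow:
  fixes z y :: "'a::ring_1"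
  shows "((\<lambda>w. z * w - w * z) ^^ n) y =
     (\<Sum>k\<le>n. of_nat (n choose k) * ((-1) ^ k * (z ^ (n - k) * y * z ^ k)))"
proof (induction n)
  case 0
  then show ?case by simp
next
  case (Suc n)
  define u where "u k m = (-1) ^ k * (z ^ m * y * z ^ k)" for k m
  have zl: "z * (of_nat c * u k m) = of_nat c * u k (Suc m)" for c k m
  proof -
    have a1: "z * (of_nat c * w) = of_nat c * (z * w)" for w
      by (metis mult.assoc mult_of_nat_commute)
    have a2: "z * ((-1) ^ k * w) = (-1) ^ k * (z * w)" for w
      by (metis mult.assoc minus_one_power_commute)
    show ?thesis unfolding u_def a1 a2 by (simp add: mult.assoc)
  qed
  have zr: "(of_nat c * u k m) * z = - (of_nat c * u (Suc k) m)" for c k m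
    unfolding u_def by (simp add: mult.assoc power_commutes)
  have IH: "((\<lambda>w. z * w - w * z) ^^ n) y = (\<Sum>k\<le>n. of_nat (n choose k) * u k (n - k))"
    using Suc.IH unfolding u_def .
  have "((\<lambda>w. z * w - w * z) ^^ Suc n) y =
     z * (\<Sum>k\<le>n. of_nat (n choose k) * u k (n - k)) - (\<Sum>k\<le>n. of_nat (n choose k) * u k (n - k)) * z"
    using IH by simp
  also have "\<dots> = (\<Sum>k\<le>n. of_nat (n choose k) * u k (Suc n - k)) + (\<Sum>k\<le>n. of_nat (n choose k) * u (Suc k) (n - k))"
  proof -
    have "z * (\<Sum>k\<le>n. of_nat (n choose k) * u k (n - k)) = (\<Sum>k\<le>n. of_nat (n choose k) * u k (Suc n - k))"
      unfolding sum_distrib_left by (rule sum.cong) (simp_all add: zl Suc_diff_le)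
    moreover have "(\<Sum>k\<le>n. of_nat (n choose k) * u k (n - k)) * z = - (\<Sum>k\<le>n. of_nat (n choose k) * u (Suc k) (n - k))"
      unfolding sum_distrib_right by (simp add: zr sum_negf)
    ultimately show ?thesis by simp
  qed
  also have "\<dots> = (\<Sum>k\<le>Suc n. of_nat (Suc n choose k) * u k (Suc n - k))"
    using pascal_sum[of n u] by (simp add: add.commute)
  finally show ?case unfolding u_def .
qed

lemma ad_pow_prime:
  fixes z y :: "'a::ring_1"
  assumes p: "prime p" and c: "of_nat p = (0::'a)"
  shows "((\<lambda>w. z * w - w * z) ^^ p) y = z ^ p * y - y * z ^ p"
proof -
  have m1: "(-1) ^ p = (-1 :: 'a)"
  proof (cases "p = 2")
    case True
    then have "(2::'a) = 0" using c by simp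
    then have "(1::'a) = -1" by (simp add: eq_neg_iff_add_eq_0 one_add_one)
    then show ?thesis using True by (metis power2_minus power_one)
  next
    case False
    then have "odd p" using prime_odd_nat[OF p] p prime_ge_2_nat[OF p] by auto
    then show ?thesis by simp
  qed
  show ?thesis
    using ad_pow[where n=p and z=z and y=y] prime_sum_middle[OF p c, of "\<lambda>k m. (-1) ^ k * (z ^ m * y * z ^ k)"]
    by (simp add: m1)
qed

lemma comm_binomial:
  fixes a b :: "'a::ring_1"
  assumes ab: "a * b = b * a"
  shows "(a + b) ^ n = (\<Sum>k\<le>n. of_nat (n choose k) * (a ^ k * b ^ (n - k)))"
proof (induction n)
  case 0 then show ?case by simp
next
  case (Suc n)
  have bpow: "b * a ^ k = a ^ k * b" for k
  proof (induction k)
    case (Suc k)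
    have "b * a ^ Suc k = (b * a) * a ^ k" by (simp add: mult.assoc)
    also have "\<dots> = a * (b * a ^ k)" by (simp add: ab mult.assoc[symmetric])
    also have "\<dots> = a ^ Suc k * b" using Suc.IH by (simp add: mult.assoc)
    finally show ?case .
  qed simp
  have oc: "x * (of_nat c * w) = of_nat c * (x * w)" for x w :: 'a and c
    by (metis mult.assoc mult_of_nat_commute)
  have "(a + b) ^ Suc n = a * (a + b) ^ n + b * (a + b) ^ n" by (simp add: distrib_right)
  also have "\<dots> = (\<Sum>k\<le>n. of_nat (n choose k) * (a ^ Suc k * b ^ (n - k)))
     + (\<Sum>k\<le>n. of_nat (n choose k) * (a ^ k * b ^ (Suc n - k)))"
  proof -
    have "a * (\<Sum>k\<le>n. of_nat (n choose k) * (a ^ k * b ^ (n - k))) = (\<Sum>k\<le>n. of_nat (n choose k) * (a ^ Suc k * b ^ (n - k)))"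
      unfolding sum_distrib_left by (rule sum.cong) (simp_all add: oc mult.assoc)
    moreover have "b * (\<Sum>k\<le>n. of_nat (n choose k) * (a ^ k * b ^ (n - k))) = (\<Sum>k\<le>n. of_nat (n choose k) * (a ^ k * b ^ (Suc n - k)))"
      unfolding sum_distrib_left
    proof (rule sum.cong)
      fix k assume "k \<in> {..n}"
      then have "Suc n - k = Suc (n - k)" by (simp add: Suc_diff_le)
      then show "b * (of_nat (n choose k) * (a ^ k * b ^ (n - k))) = of_nat (n choose k) * (a ^ k * b ^ (Suc n - k))"
      proof -
        have "b * (of_nat (n choose k) * (a ^ k * b ^ (n - k))) = of_nat (n choose k) * ((b * a ^ k) * b ^ (n - k))"
          by (simp add: oc mult.assoc)
        also have "\<dots> = of_nat (n choose k) * (a ^ k * b ^ Suc (n - k))"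
          by (simp add: bpow mult.assoc)
        finally show ?thesis using \<open>Suc n - k = Suc (n - k)\<close> by simp
      qed
    qed simp
    ultimately show ?thesis using Suc.IH by simp
  qed
  also have "\<dots> = (\<Sum>k\<le>Suc n. of_nat (Suc n choose k) * (a ^ k * b ^ (Suc n - k)))"
    using pascal_sum[of n "\<lambda>k m. a ^ k * b ^ m"] by simp
  finally show ?case .
qed

lemma comm_frobenius:
  fixes a b :: "'a::ring_1"
  assumes ab: "a * b = b * a" and p: "prime p" and c: "of_nat p = (0::'a)"
  shows "(a + b) ^ p = a ^ p + b ^ p"
  using comm_binomial[OF ab, of p] prime_sum_middle[OF p c, of "\<lambda>k m. a ^ k * b ^ m"]
  by (simp add: add.commute)


context hset begin

declare phi_add [simp del] phi_diff [simp del] phi_minus [simp del]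

lemma t1P: "t1 \<in> Prim \<phi> \<Delta>" and t2P: "t2 \<in> Prim \<phi> \<Delta>"
  using basis unfolding prim_basis_def by blast+

lemma indep: "\<phi> a * t1 + \<phi> b * t2 = 0 \<Longrightarrow> a = 0 \<and> b = 0"
  using basis unfolding prim_basis_def by blast

lemma spanP: "t \<in> Prim \<phi> \<Delta> \<Longrightarrow> \<exists>a b. t = \<phi> a * t1 + \<phi> b * t2"
  using basis unfolding prim_basis_def by blast

lemma coeff_eq:
  assumes "\<phi> a * t1 + \<phi> b * t2 = \<phi> a' * t1 + \<phi> b' * t2"
  shows "a = a' \<and> b = b'"
proof -
  have "\<phi> (a - a') * t1 + \<phi> (b - b') * t2 = 0"
    using assms by (simp add: phi_diff algebra_simps)
  then show ?thesis using indep by fastforce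
qed

lemma lin_prim: "\<phi> a * t1 + \<phi> b * t2 \<in> Prim \<phi> \<Delta>"
  by (intro prim_add prim_smult t1P t2P)

lemma phi_left_comm: "\<phi> x * (\<phi> y * w) = \<phi> (x * y) * w"
  by (simp add: phi_mult mult.assoc)

lemma pm: "(\<phi> x * u) * (\<phi> y * w) = \<phi> (x * y) * (u * w)"
  by (simp only: mult.assoc mult_phi_left[of u] phi_left_comm)

lemma ab6: "((w1::'a::ab_group_add) + (w3 + (w2 + w4))) - (w1 + (w6 + (w5 + w4))) = w3 - w6 - (w5 - w2)"
  by (simp add: algebra_simps)

lemma comm_lin:
  "(\<phi> \<alpha> * t1 + \<phi> \<beta> * t2) * (\<phi> a * t1 + \<phi> b * t2) - (\<phi> a * t1 + \<phi> b * t2) * (\<phi> \<alpha> * t1 + \<phi> \<beta> * t2)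
   = \<phi> (\<beta> * a - \<alpha> * b) * (t2 * t1 - t1 * t2)"
proof -
  have e1: "(\<phi> \<alpha> * t1 + \<phi> \<beta> * t2) * (\<phi> a * t1 + \<phi> b * t2) = \<phi>(\<alpha>*a)*(t1*t1) + (\<phi>(\<beta>*a)*(t2*t1) + (\<phi>(\<alpha>*b)*(t1*t2) + \<phi>(\<beta>*b)*(t2*t2)))"
    by (simp only: distrib_left distrib_right pm add.assoc)
  have e2: "(\<phi> a * t1 + \<phi> b * t2) * (\<phi> \<alpha> * t1 + \<phi> \<beta> * t2) = \<phi>(a*\<alpha>)*(t1*t1) + (\<phi>(b*\<alpha>)*(t2*t1) + (\<phi>(a*\<beta>)*(t1*t2) + \<phi>(b*\<beta>)*(t2*t2)))"
    by (simp only: distrib_left distrib_right pm add.assoc)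
  have e3: "\<phi> (\<beta> * a - \<alpha> * b) * (t2 * t1 - t1 * t2) = \<phi>(\<beta>*a)*(t2*t1) - \<phi>(\<alpha>*b)*(t2*t1) - (\<phi>(\<beta>*a)*(t1*t2) - \<phi>(\<alpha>*b)*(t1*t2))"
    by (simp only: phi_diff right_diff_distrib left_diff_distrib)
  show ?thesis unfolding e1 e2 e3 mult.commute[of a \<alpha>] mult.commute[of b \<alpha>]
       mult.commute[of a \<beta>] mult.commute[of b \<beta>] by (rule ab6)
qed

lemma phi_gg_zero:
  assumes "g \<noteq> 0" "\<phi> x * g = 0" shows "x = 0"
proof (rule ccontr)
  assume "x \<noteq> 0"
  then have "g = \<phi> (inverse x) * (\<phi> x * g)" by (simp add: phi_left_comm)
  then show False using assms by simp
qed

lemma nonab_zpow: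
  assumes g: "t2 * t1 - t1 * t2 \<noteq> 0"
    and gexp: "t2 * t1 - t1 * t2 = \<phi> \<gamma>1 * t1 + \<phi> \<gamma>2 * t2"
  shows "(\<phi> \<alpha> * t1 + \<phi> \<beta> * t2) ^ p = \<phi> ((\<beta> * \<gamma>1 - \<alpha> * \<gamma>2) ^ (p - 1)) * (\<phi> \<alpha> * t1 + \<phi> \<beta> * t2)"
proof -
  define z where "z = \<phi> \<alpha> * t1 + \<phi> \<beta> * t2"
  define gg where "gg = t2 * t1 - t1 * t2"
  define \<kappa> where "\<kappa> = \<beta> * \<gamma>1 - \<alpha> * \<gamma>2"
  define ad where "ad = (\<lambda>w. z * w - w * z)"
  have cl: "ad (\<phi> a * t1 + \<phi> b * t2) = \<phi> (\<beta> * a - \<alpha> * b) * gg" for a b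
    unfolding ad_def z_def gg_def by (rule comm_lin)
  have zg: "ad gg = \<phi> \<kappa> * gg"
    using cl[of \<gamma>1 \<gamma>2] gexp unfolding gg_def \<kappa>_def by simp
  have adsc: "ad (\<phi> x * w) = \<phi> x * ad w" for x w
  proof -
    have "z * (\<phi> x * w) = \<phi> x * (z * w)" by (rule mult_phi_left)
    moreover have "(\<phi> x * w) * z = \<phi> x * (w * z)" by (simp only: mult.assoc)
    ultimately show ?thesis unfolding ad_def by (simp only: right_diff_distrib)
  qed
  have iter: "(ad ^^ Suc n) (\<phi> a * t1 + \<phi> b * t2) = \<phi> (\<kappa> ^ n * (\<beta> * a - \<alpha> * b)) * gg" for n a b
  proof (induction n)
    case 0 then show ?case using cl by simp
  next
    case (Suc n)
    have "(ad ^^ Suc (Suc n)) (\<phi> a * t1 + \<phi> b * t2) = ad (\<phi> (\<kappa> ^ n * (\<beta> * a - \<alpha> * b)) * gg)"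
      using Suc.IH by simp
    also have "\<dots> = \<phi> (\<kappa> ^ n * (\<beta> * a - \<alpha> * b) * \<kappa>) * gg"
      by (simp only: adsc zg phi_left_comm)
    also have "\<dots> = \<phi> (\<kappa> ^ Suc n * (\<beta> * a - \<alpha> * b)) * gg"
      by (rule arg_cong[where f="\<lambda>x. \<phi> x * gg"]) (simp add: algebra_simps)
    finally show ?case .
  qed
  obtain q where q: "p = Suc q" using p_ge2 by (metis Suc_pred less_le_trans numeral_2_eq_2 zero_less_Suc)
  have comm: "z ^ p * y - y * z ^ p = \<phi> (\<kappa> ^ (p - 1)) * (z * y - y * z)"
    if y: "y = \<phi> a * t1 + \<phi> b * t2" for y a b
  proof -
    have "z ^ p * y - y * z ^ p = (ad ^^ p) y"
      using ad_pow_prime[OF prime charH, of z y] unfolding ad_def by simp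
    also have "\<dots> = \<phi> (\<kappa> ^ (p - 1) * (\<beta> * a - \<alpha> * b)) * gg"
      using iter[of q a b] y q by simp
    also have "\<dots> = \<phi> (\<kappa> ^ (p - 1)) * (z * y - y * z)"
    proof -
      have "z * y - y * z = \<phi> (\<beta> * a - \<alpha> * b) * gg" using cl[of a b] y unfolding ad_def by simp
      then show ?thesis by (simp only: phi_left_comm)
    qed
    finally show ?thesis .
  qed
  define c where "c = z ^ p - \<phi> (\<kappa> ^ (p - 1)) * z"
  have cc: "c * y - y * c = 0" if "y = \<phi> a * t1 + \<phi> b * t2" for y a b
  proof -
    have m1: "(\<phi> (\<kappa> ^ (p - 1)) * z) * y = \<phi> (\<kappa> ^ (p - 1)) * (z * y)" by (simp only: mult.assoc)
    have m2: "y * (\<phi> (\<kappa> ^ (p - 1)) * z) = \<phi> (\<kappa> ^ (p - 1)) * (y * z)" by (rule mult_phi_left)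
    have "c * y - y * c = (z ^ p * y - y * z ^ p) - \<phi> (\<kappa> ^ (p - 1)) * (z * y - y * z)"
      unfolding c_def left_diff_distrib right_diff_distrib m1 m2 by (simp add: algebra_simps)
    then show ?thesis using comm[OF that] by simp
  qed
  have zP: "z \<in> Prim \<phi> \<Delta>" unfolding z_def by (rule lin_prim)
  have cP: "c \<in> Prim \<phi> \<Delta>" unfolding c_def
    by (intro prim_diff prim_pow zP prim_smult)
  obtain a0 b0 where c0: "c = \<phi> a0 * t1 + \<phi> b0 * t2" using spanP[OF cP] by blast
  have "c * t1 - t1 * c = \<phi> b0 * gg"
    using comm_lin[of a0 b0 1 0] c0 unfolding gg_def by simp
  moreover have "c * t1 - t1 * c = 0" using cc[of t1 1 0] by simp
  ultimately have b0: "b0 = 0" using phi_gg_zero g unfolding gg_def by metis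
  have "c * t2 - t2 * c = \<phi> (- a0) * gg"
    using comm_lin[of a0 b0 0 1] c0 unfolding gg_def by simp
  moreover have "c * t2 - t2 * c = 0" using cc[of t2 0 1] by simp
  ultimately have a0: "- a0 = 0" using phi_gg_zero g unfolding gg_def by metis
  have "c = 0" using c0 a0 b0 by simp
  then show ?thesis unfolding c_def z_def \<kappa>_def by simp
qed

lemma phi_pow_mult:
  "(\<phi> c * x) ^ n = \<phi> (c ^ n) * x ^ n"
proof (induction n)
  case (Suc n)
  have "(\<phi> c * x) ^ Suc n = (\<phi> c * x) * (\<phi> (c ^ n) * x ^ n)" using Suc.IH by simp
  also have "\<dots> = \<phi> (c ^ Suc n) * x ^ Suc n"
    by (simp only: pm power_Suc)
  finally show ?case .
qed simp

end


definition subr :: "'k::field set \<Rightarrow> bool" where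
  "subr A \<longleftrightarrow> 0 \<in> A \<and> 1 \<in> A \<and> (\<forall>x\<in>A. \<forall>y\<in>A. x + y \<in> A \<and> x * y \<in> A) \<and> (\<forall>x\<in>A. - x \<in> A)"

lemma subr_UNIV: "subr UNIV" by (simp add: subr_def)

context hset begin

inductive_set lin :: "'k set \<Rightarrow> 'h set \<Rightarrow> 'h set" for A0 G where
  lin_zero: "0 \<in> lin A0 G"
| lin_gen: "c \<in> A0 \<Longrightarrow> g \<in> G \<Longrightarrow> \<phi> c * g \<in> lin A0 G"
| lin_add: "x \<in> lin A0 G \<Longrightarrow> y \<in> lin A0 G \<Longrightarrow> x + y \<in> lin A0 G"

lemma lin_smult:
  assumes A: "subr A0" and c: "c \<in> A0" and x: "x \<in> lin A0 G"
  shows "\<phi> c * x \<in> lin A0 G"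
  using x
proof (induction rule: lin.induct)
  case lin_zero then show ?case by (simp add: lin.lin_zero)
next
  case (lin_gen c' g)
  have "c * c' \<in> A0" using A c lin_gen unfolding subr_def by blast
  then show ?case using lin.lin_gen[OF _ lin_gen(2)] by (simp add: phi_left_comm)
next
  case (lin_add x y)
  then show ?case by (simp add: distrib_left lin.lin_add)
qed

lemma lin_left:
  assumes A: "subr A0" and G: "\<And>g. g \<in> G \<Longrightarrow> s * g \<in> lin A0 G" and x: "x \<in> lin A0 G"
  shows "s * x \<in> lin A0 G"
  using x
proof (induction rule: lin.induct)
  case lin_zero then show ?case by (simp add: lin.lin_zero)
next
  case (lin_gen c g)
  then show ?case using lin_smult[OF A lin_gen(1) G[OF lin_gen(2)]] by (simp add: mult_phi_left)
next
  case (lin_add x y)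
  then show ?case by (simp add: distrib_left lin.lin_add)
qed

lemma lin_G: "subr A0 \<Longrightarrow> g \<in> G \<Longrightarrow> g \<in> lin A0 G"
  using lin_gen[of 1 A0 g G] unfolding subr_def by simp

lemma lin_neg: "subr A0 \<Longrightarrow> x \<in> lin A0 G \<Longrightarrow> - x \<in> lin A0 G"
  using lin_smult[of A0 "-1" x G] unfolding subr_def by (simp add: phi_minus)

lemma lin_rep:
  assumes A: "subr A0" and fin: "finite G" and x: "x \<in> lin A0 G"
  shows "\<exists>r. (\<forall>g. r g \<in> A0) \<and> x = (\<Sum>g\<in>G. \<phi> (r g) * g)"
  using x
proof (induction rule: lin.induct)
  case lin_zero
  then show ?case using A unfolding subr_def by (intro exI[of _ "\<lambda>_. 0"]) simp
next
  case (lin_gen c g)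
  have "(\<Sum>g'\<in>G. \<phi> (if g' = g then c else 0) * g') = (\<Sum>g'\<in>G. if g' = g then \<phi> c * g else 0)"
    by (rule sum.cong) auto
  also have "\<dots> = \<phi> c * g" using fin lin_gen by simp
  finally show ?case using A lin_gen unfolding subr_def
    by (intro exI[of _ "\<lambda>g'. if g' = g then c else 0"]) auto
next
  case (lin_add x y)
  then obtain r r' where r: "\<forall>g. r g \<in> A0" "x = (\<Sum>g\<in>G. \<phi> (r g) * g)"
    and r': "\<forall>g. r' g \<in> A0" "y = (\<Sum>g\<in>G. \<phi> (r' g) * g)" by blast
  have "x + y = (\<Sum>g\<in>G. \<phi> (r g + r' g) * g)"
    unfolding r(2) r'(2) by (simp add: phi_add distrib_right sum.distrib)
  then show ?case using r(1) r'(1) A unfolding subr_def by (intro exI[of _ "\<lambda>g. r g + r' g"]) auto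
qed

lemma subalg_mono_lemma:
  assumes "\<And>s. s \<in> SS \<Longrightarrow> s \<in> subalg_gen A T" and "h \<in> subalg_gen A SS"
  shows "h \<in> subalg_gen A T"
  using assms(2)
  by (induction rule: subalg_gen.induct) (auto intro: subalg_gen.intros assms(1))

definition Mon :: "'h \<Rightarrow> 'h \<Rightarrow> 'h set" where
  "Mon s1 s2 = (\<lambda>(a, b). s1 ^ a * s2 ^ b) ` ({..<p} \<times> {..<p})"

lemma Mon_I: "a < p \<Longrightarrow> b < p \<Longrightarrow> s1 ^ a * s2 ^ b \<in> Mon s1 s2"
  unfolding Mon_def by force

lemma finite_Mon: "finite (Mon s1 s2)" unfolding Mon_def by simp

lemma card_Mon: "card (Mon s1 s2) \<le> p ^ 2"
proof -
  have "card (Mon s1 s2) \<le> card ({..<p} \<times> {..<p})" unfolding Mon_def by (rule card_image_le) simp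
  then show ?thesis by (simp add: power2_eq_square)
qed

end

locale pbw = hset \<phi> \<Delta> \<epsilon> S p t1 t2
  for \<phi> :: "'k::field \<Rightarrow> 'h::ring_1" and \<Delta> \<epsilon> S p t1 t2 +
  fixes A0 :: "'k set" and s1 s2 :: 'h and c11 c21 c12 c22 a1 a2 :: 'k
  assumes A0: "subr A0"
    and cin: "c11 \<in> A0" "c21 \<in> A0" "c12 \<in> A0" "c22 \<in> A0" "a1 \<in> A0" "a2 \<in> A0"
    and s1p: "s1 ^ p = \<phi> c11 * s1 + \<phi> c21 * s2"
    and s2p: "s2 ^ p = \<phi> c12 * s1 + \<phi> c22 * s2"
    and s21: "s2 * s1 = s1 * s2 + \<phi> a1 * s1 + \<phi> a2 * s2"
begin

abbreviation "L \<equiv> lin A0 (Mon s1 s2)"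

lemma p_pos: "0 < p" "1 < p" using p_ge2 by auto

lemma s1_L: "s1 \<in> L" using lin_G[OF A0 Mon_I[OF p_pos(2) p_pos(1), of s1 s2]] by simp
lemma s2_L: "s2 \<in> L" using lin_G[OF A0 Mon_I[OF p_pos(1) p_pos(2), of s1 s2]] by simp
lemma one_L: "1 \<in> L" using lin_G[OF A0 Mon_I[OF p_pos(1) p_pos(1), of s1 s2]] by simp

lemma L_smult: "c \<in> A0 \<Longrightarrow> x \<in> L \<Longrightarrow> \<phi> c * x \<in> L"
  using lin_smult[OF A0] by blast

lemma L_add: "x \<in> L \<Longrightarrow> y \<in> L \<Longrightarrow> x + y \<in> L"
  by (rule lin_add)

lemma s2pow: "b < p \<Longrightarrow> s2 ^ Suc b \<in> L"
proof (cases "Suc b < p")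
  case True
  then show ?thesis using lin_G[OF A0 Mon_I[OF p_pos(1) True, of s1 s2]] by simp
next
  case False
  assume "b < p"
  then have "Suc b = p" using False by simp
  then have "s2 ^ Suc b = \<phi> c12 * s1 + \<phi> c22 * s2" using s2p by simp
  then show ?thesis using L_add L_smult cin s1_L s2_L by simp
qed

lemma s1mon:
  assumes a: "a < p" and b: "b < p"
  shows "s1 * (s1 ^ a * s2 ^ b) \<in> L"
proof (cases "Suc a < p")
  case True
  then show ?thesis using lin_G[OF A0 Mon_I[OF True b, of s1 s2]] by (simp add: mult.assoc)
next
  case False
  then have "Suc a = p" using a by simp
  have "s1 * (s1 ^ a * s2 ^ b) = s1 ^ Suc a * s2 ^ b" by (simp add: mult.assoc)
  also have "\<dots> = (\<phi> c11 * s1 + \<phi> c21 * s2) * s2 ^ b"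
    using s1p \<open>Suc a = p\<close> by simp
  finally have "s1 * (s1 ^ a * s2 ^ b) = (\<phi> c11 * s1 + \<phi> c21 * s2) * s2 ^ b" .
  also have "\<dots> = \<phi> c11 * (s1 ^ 1 * s2 ^ b) + \<phi> c21 * s2 ^ Suc b"
    by (simp add: distrib_right mult.assoc)
  finally show ?thesis
    using L_add L_smult cin lin_G[OF A0 Mon_I[OF p_pos(2) b, of s1 s2]] s2pow[OF b] by simp
qed

lemma s1lin: "x \<in> L \<Longrightarrow> s1 * x \<in> L"
proof (rule lin_left[OF A0])
  fix g assume "g \<in> Mon s1 s2"
  then obtain a b where "a < p" "b < p" "g = s1 ^ a * s2 ^ b" unfolding Mon_def by auto
  then show "s1 * g \<in> L" using s1mon by simp
qed

lemma s2mon: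
  assumes "a < p" "b < p"
  shows "s2 * (s1 ^ a * s2 ^ b) \<in> L"
  using assms
proof (induction a arbitrary: b)
  case 0
  then show ?case using s2pow[of b] by simp
next
  case (Suc a)
  have IH: "s2 * (s1 ^ a * s2 ^ b) \<in> L" using Suc by simp
  have "s2 * (s1 ^ Suc a * s2 ^ b) = (s2 * s1) * (s1 ^ a * s2 ^ b)"
    by (simp add: mult.assoc)
  also have "\<dots> = s1 * (s2 * (s1 ^ a * s2 ^ b)) + \<phi> a1 * (s1 * (s1 ^ a * s2 ^ b)) + \<phi> a2 * (s2 * (s1 ^ a * s2 ^ b))"
    unfolding s21 by (simp add: distrib_right mult.assoc)
  finally show ?case
    using L_add L_smult cin s1lin[OF IH] s1mon[of a b] IH Suc.prems by simp
qed

lemma s2lin: "x \<in> L \<Longrightarrow> s2 * x \<in> L"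
proof (rule lin_left[OF A0])
  fix g assume "g \<in> Mon s1 s2"
  then obtain a b where "a < p" "b < p" "g = s1 ^ a * s2 ^ b" unfolding Mon_def by auto
  then show "s2 * g \<in> L" using s2mon by simp
qed

lemma subalg_L:
  assumes S: "\<And>s. s \<in> T \<Longrightarrow> s \<in> L \<and> (\<forall>x\<in>L. s * x \<in> L)"
    and h: "h \<in> subalg_gen (\<phi> ` A0) T"
  shows "h \<in> L"
proof -
  have "h \<in> L \<and> (\<forall>x\<in>L. h * x \<in> L)"
    using h
  proof (induction rule: subalg_gen.induct)
    case (base a)
    then obtain c where c: "c \<in> A0" "a = \<phi> c" by blast
    then show ?case using L_smult[OF c(1) one_L] L_smult[OF c(1)] by simp
  next
    case (gen s) then show ?case using S by blast
  next
    case zero then show ?case by (simp add: lin.lin_zero)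
  next
    case one then show ?case using one_L by simp
  next
    case (add x y)
    then show ?case by (simp add: distrib_right L_add)
  next
    case (neg x)
    then show ?case using lin_neg[OF A0] by simp
  next
    case (mult x y)
    then show ?case by (simp add: mult.assoc)
  qed
  then show ?thesis by blast
qed

end


sublocale hset \<subseteq> V: vector_space "\<lambda>c x. \<phi> c * x"
  by unfold_locales (simp_all add: distrib_left distrib_right phi_add phi_left_comm)

context hset begin

lemma lin_span: "x \<in> lin A0 G \<Longrightarrow> x \<in> V.span G"
  by (induction rule: lin.induct) (auto intro: V.span_zero V.span_add V.span_scale V.span_base)

lemma sum_delta_phi:
  assumes "finite G" "g \<in> G"
  shows "(\<Sum>g'\<in>G. \<phi> (if g' = g then u else 0) * g') = \<phi> u * g"
proof -
  have "(\<Sum>g'\<in>G. \<phi> (if g' = g then u else 0) * g') = (\<Sum>g'\<in>G. if g' = g then \<phi> u * g else 0)"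
    by (rule sum.cong) auto
  also have "\<dots> = \<phi> u * g" using assms by simp
  finally show ?thesis .
qed

lemma Mon_indep:
  assumes span: "UNIV \<subseteq> lin UNIV (Mon s1 s2)"
  shows "V.independent (Mon s1 s2)"
proof
  let ?n = "p ^ 2"
  obtain e :: "nat \<Rightarrow> 'h" where
    sp: "\<forall>x. \<exists>c. x = (\<Sum>k<?n. \<phi> (c k) * e k)" and
    ind: "\<forall>c. (\<Sum>k<?n. \<phi> (c k) * e k) = 0 \<longrightarrow> (\<forall>k<?n. c k = 0)"
    using rank unfolding K_rank_def by blast
  have delta: "(\<Sum>m<?n. \<phi> (if m = k then 1 else 0) * e m) = e k" if "k < ?n" for k
  proof -
    have "(\<Sum>m<?n. \<phi> (if m = k then 1 else 0) * e m) = (\<Sum>m<?n. if m = k then e m else 0)"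
      by (rule sum.cong) auto
    then show ?thesis using that by simp
  qed
  have inj: "inj_on e {..<?n}"
  proof (rule inj_onI)
    fix k k' assume k: "k \<in> {..<?n}" and k': "k' \<in> {..<?n}" and eq: "e k = e k'"
    show "k = k'"
    proof (rule ccontr)
      assume ne: "k \<noteq> k'"
      define c where "c m = (if m = k then 1 else 0) - (if m = k' then 1 else (0::'k))" for m
      have "(\<Sum>m<?n. \<phi> (c m) * e m) = (\<Sum>m<?n. \<phi> (if m = k then 1 else 0) * e m) - (\<Sum>m<?n. \<phi> (if m = k' then 1 else 0) * e m)"
        unfolding c_def by (simp add: phi_diff left_diff_distrib sum_subtractf)
      also have "\<dots> = 0" using delta k k' eq by simp
      finally have "c k = 0" using ind k by blast
      then show False using ne unfolding c_def by simp
    qed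
  qed
  define E where "E = e ` {..<?n}"
  have cardE: "card E = ?n" unfolding E_def using card_image[OF inj] by simp
  have finE: "finite E" unfolding E_def by simp
  have indE: "V.independent E"
  proof
    assume "V.dependent E"
    then obtain u where u: "\<exists>v\<in>E. u v \<noteq> 0" "(\<Sum>v\<in>E. \<phi> (u v) * v) = 0"
      using V.dependent_finite[OF finE] by blast
    have "(\<Sum>k<?n. \<phi> (u (e k)) * e k) = 0"
      using u(2) unfolding E_def sum.reindex[OF inj] by simp
    then have "\<forall>k<?n. u (e k) = 0" using spec[OF ind, of "\<lambda>k. u (e k)"] by blast
    then show False using u(1) unfolding E_def by auto
  qed
  have spE: "x \<in> V.span E" for x
  proof -
    obtain c where "x = (\<Sum>k<?n. \<phi> (c k) * e k)" using sp by blast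
    moreover have "(\<Sum>k<?n. \<phi> (c k) * e k) \<in> V.span E"
    proof (rule V.span_sum)
      fix k assume "k \<in> {..<?n}"
      then have "e k \<in> V.span E" unfolding E_def by (intro V.span_base) auto
      then show "\<phi> (c k) * e k \<in> V.span E" by (rule V.span_scale)
    qed
    ultimately show ?thesis by simp
  qed
  assume dep: "V.dependent (Mon s1 s2)"
  then obtain a where a: "a \<in> Mon s1 s2" "a \<in> V.span (Mon s1 s2 - {a})"
    unfolding V.dependent_def by blast
  have "Mon s1 s2 \<subseteq> V.span (Mon s1 s2 - {a})"
  proof
    fix x assume x: "x \<in> Mon s1 s2"
    show "x \<in> V.span (Mon s1 s2 - {a})"
    proof (cases "x = a")
      case True then show ?thesis using a by simp
    next
      case False then show ?thesis using x by (intro V.span_base) simp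
    qed
  qed
  then have "V.span (Mon s1 s2) \<subseteq> V.span (Mon s1 s2 - {a})"
    by (rule V.span_minimal[OF _ V.subspace_span])
  moreover have "E \<subseteq> V.span (Mon s1 s2)"
  proof
    fix x assume "x \<in> E"
    have "x \<in> lin UNIV (Mon s1 s2)" using span by blast
    then show "x \<in> V.span (Mon s1 s2)" by (rule lin_span)
  qed
  ultimately have "E \<subseteq> V.span (Mon s1 s2 - {a})" by blast
  then have "card E \<le> card (Mon s1 s2 - {a})"
    using V.independent_span_bound[OF finite_Diff[OF finite_Mon] indE] by blast
  also have "\<dots> < card (Mon s1 s2)"
  proof -
    have "card (Mon s1 s2) > 0" using a(1) finite_Mon[of s1 s2] card_gt_0_iff by blast
    then show ?thesis using a(1) finite_Mon[of s1 s2] by simp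
  qed
  also have "\<dots> \<le> ?n" by (rule card_Mon)
  finally show False using cardE by simp
qed

lemma Mon_coeff:
  assumes indep: "V.independent (Mon s1 s2)" and s12: "s1 \<noteq> s2"
    and s1M: "s1 \<in> Mon s1 s2" and s2M: "s2 \<in> Mon s1 s2"
    and h: "(\<Sum>g\<in>Mon s1 s2. \<phi> (r g) * g) = \<phi> u * s1 + \<phi> w * s2"
  shows "r s1 = u \<and> r s2 = w"
proof -
  define r' where "r' g = r g - (if g = s1 then u else 0) - (if g = s2 then w else 0)" for g
  have "(\<Sum>g\<in>Mon s1 s2. \<phi> (r' g) * g) = (\<Sum>g\<in>Mon s1 s2. \<phi> (r g) * g)
      - (\<Sum>g\<in>Mon s1 s2. \<phi> (if g = s1 then u else 0) * g) - (\<Sum>g\<in>Mon s1 s2. \<phi> (if g = s2 then w else 0) * g)"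
    unfolding r'_def by (simp add: phi_diff left_diff_distrib sum_subtractf)
  also have "\<dots> = 0" using h sum_delta_phi[OF finite_Mon s1M] sum_delta_phi[OF finite_Mon s2M] by simp
  finally have "\<forall>g\<in>Mon s1 s2. r' g = 0"
    using indep V.dependent_finite[OF finite_Mon] by blast
  then have "r' s1 = 0" "r' s2 = 0" using s1M s2M by blast+
  then show ?thesis using s12 unfolding r'_def by auto
qed

end


context hset begin

lemma order_coords:
  assumes A0: "subr A0"
    and cin: "c11 \<in> A0" "c21 \<in> A0" "c12 \<in> A0" "c22 \<in> A0" "a1 \<in> A0" "a2 \<in> A0"
    and s1p: "s1 ^ p = \<phi> c11 * s1 + \<phi> c21 * s2"
    and s2p: "s2 ^ p = \<phi> c12 * s1 + \<phi> c22 * s2"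
    and s21: "s2 * s1 = s1 * s2 + \<phi> a1 * s1 + \<phi> a2 * s2"
    and primspan: "\<And>t. t \<in> Prim \<phi> \<Delta> \<Longrightarrow> \<exists>\<alpha> \<beta>. t = \<phi> \<alpha> * s1 + \<phi> \<beta> * s2"
    and s12: "s1 \<noteq> s2"
    and h: "\<phi> u * s1 + \<phi> w * s2 \<in> subalg_gen (\<phi> ` A0) {s1, s2}"
  shows "u \<in> A0 \<and> w \<in> A0"
proof -
  interpret R: pbw \<phi> \<Delta> \<epsilon> S p t1 t2 A0 s1 s2 c11 c21 c12 c22 a1 a2
    by unfold_locales (fact A0 cin s1p s2p s21)+
  interpret K: pbw \<phi> \<Delta> \<epsilon> S p t1 t2 UNIV s1 s2 c11 c21 c12 c22 a1 a2
    by unfold_locales (simp_all add: subr_UNIV s1p s2p s21)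
  have span: "UNIV \<subseteq> lin UNIV (Mon s1 s2)"
  proof
    fix x :: 'h
    have "x \<in> subalg_gen (\<phi> ` UNIV) (Prim \<phi> \<Delta>)" using pg unfolding primitively_generated_def by simp
    then show "x \<in> lin UNIV (Mon s1 s2)"
    proof (rule K.subalg_L[rotated])
      fix s assume "s \<in> Prim \<phi> \<Delta>"
      then obtain \<alpha> \<beta> where s: "s = \<phi> \<alpha> * s1 + \<phi> \<beta> * s2" using primspan by blast
      have "s \<in> K.L" unfolding s by (intro K.L_add K.L_smult K.s1_L K.s2_L) simp_all
      moreover have "s * y \<in> K.L" if "y \<in> K.L" for y
      proof -
        have "s * y = \<phi> \<alpha> * (s1 * y) + \<phi> \<beta> * (s2 * y)" unfolding s by (simp add: distrib_right mult.assoc)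
        then show ?thesis using that by (simp add: K.L_add K.L_smult K.s1lin K.s2lin)
      qed
      ultimately show "s \<in> K.L \<and> (\<forall>y\<in>K.L. s * y \<in> K.L)" by blast
    qed
  qed
  have indep: "V.independent (Mon s1 s2)" by (rule Mon_indep[OF span])
  have hL: "\<phi> u * s1 + \<phi> w * s2 \<in> R.L"
  proof (rule R.subalg_L[OF _ h])
    fix s assume "s \<in> {s1, s2}"
    then show "s \<in> R.L \<and> (\<forall>y\<in>R.L. s * y \<in> R.L)"
      using R.s1_L R.s2_L R.s1lin R.s2lin by blast
  qed
  obtain r where r: "\<forall>g. r g \<in> A0" "\<phi> u * s1 + \<phi> w * s2 = (\<Sum>g\<in>Mon s1 s2. \<phi> (r g) * g)"
    using lin_rep[OF A0 finite_Mon hL] by blast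
  have s1M: "s1 \<in> Mon s1 s2" using Mon_I[OF R.p_pos(2) R.p_pos(1), of s1 s2] by simp
  have s2M: "s2 \<in> Mon s1 s2" using Mon_I[OF R.p_pos(1) R.p_pos(2), of s1 s2] by simp
  have "r s1 = u \<and> r s2 = w" using Mon_coeff[OF indep s12 s1M s2M r(2)[symmetric]] .
  then show ?thesis using r(1) by metis
qed

lemma conv:
  assumes a: "a \<noteq> 0" and d: "d \<noteq> 0"
  shows "\<phi> P * t1 + \<phi> Q * t2 = \<phi> (P / a) * (\<phi> a * t1 + \<phi> \<theta> * t2) + \<phi> ((Q - P * \<theta> / a) / d) * (\<phi> d * t2)"
proof -
  have "\<phi> (P / a) * (\<phi> a * t1 + \<phi> \<theta> * t2) + \<phi> ((Q - P * \<theta> / a) / d) * (\<phi> d * t2)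
     = \<phi> (P / a * a) * t1 + (\<phi> (P / a * \<theta>) * t2 + \<phi> ((Q - P * \<theta> / a) / d * d) * t2)"
    by (simp only: distrib_left phi_left_comm add.assoc)
  also have "\<dots> = \<phi> (P / a * a) * t1 + \<phi> (P / a * \<theta> + (Q - P * \<theta> / a) / d * d) * t2"
    by (simp only: phi_add distrib_right)
  also have "\<dots> = \<phi> P * t1 + \<phi> Q * t2" using a d by simp
  finally show ?thesis by simp
qed

lemma lin2:
  "\<phi> x * (\<phi> y1 * t1 + \<phi> y2 * t2) + \<phi> z * (\<phi> w1 * t1 + \<phi> w2 * t2) =
   \<phi> (x * y1 + z * w1) * t1 + \<phi> (x * y2 + z * w2) * t2"
proof -
  have "\<phi> x * (\<phi> y1 * t1 + \<phi> y2 * t2) + \<phi> z * (\<phi> w1 * t1 + \<phi> w2 * t2) =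
     (\<phi> (x * y1) * t1 + \<phi> (z * w1) * t1) + (\<phi> (x * y2) * t2 + \<phi> (z * w2) * t2)"
    by (simp only: distrib_left phi_left_comm add_ac)
  also have "\<dots> = \<phi> (x * y1 + z * w1) * t1 + \<phi> (x * y2 + z * w2) * t2"
    by (simp only: phi_add distrib_right)
  finally show ?thesis .
qed

end


context hset begin

lemma order_R:
  assumes dv: "normalized_discrete_valuation v"
    and unif: "\<pi> \<noteq> 0" "v \<pi> = 1"
    and B1: "t1 ^ p = \<phi> (B $ 1 $ 1) * t1 + \<phi> (B $ 2 $ 1) * t2"
    and B2: "t2 ^ p = \<phi> (B $ 1 $ 2) * t1 + \<phi> (B $ 2 $ 2) * t2"
    and vt: "vK_le v \<theta> j"
    and int: "in_M2 (val_ring v)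
       (matrix_inv (mat2 (\<pi> powi i) 0 \<theta> (\<pi> powi j)) ** B **
        entrywise_pow (mat2 (\<pi> powi i) 0 \<theta> (\<pi> powi j)) p)"
    and h: "\<phi> u * (\<phi> (\<pi> powi i) * t1 + \<phi> \<theta> * t2) + \<phi> w * (\<phi> (\<pi> powi j) * t2)
       \<in> hopf_order_given_by \<phi> (val_ring v) t1 t2 (mat2 (\<pi> powi i) 0 \<theta> (\<pi> powi j))"
  shows "u \<in> val_ring v \<and> w \<in> val_ring v"
proof -
  interpret dval v by (rule dval.intro[OF dv])
  define a where "a = \<pi> powi i"
  define d where "d = \<pi> powi j"
  have a0: "a \<noteq> 0" and d0: "d \<noteq> 0" using unif unfolding a_def d_def by simp_all
  have va: "v a = i" and vd: "v d = j" using v_powi[OF unif(1)] unif(2) unfolding a_def d_def by simp_all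
  have th0: "\<theta> \<noteq> 0" and vth: "v \<theta> \<le> j" using vt unfolding vK_le_def by blast+
  define x1 where "x1 = \<phi> a * t1 + \<phi> \<theta> * t2"
  define x2 where "x2 = \<phi> d * t2"
  define b11 where "b11 = B $ 1 $ 1"
  define b12 where "b12 = B $ 1 $ 2"
  define b21 where "b21 = B $ 2 $ 1"
  define b22 where "b22 = B $ 2 $ 2"
  define P1 where "P1 = a ^ p * b11 + \<theta> ^ p * b12"
  define Q1 where "Q1 = a ^ p * b21 + \<theta> ^ p * b22"
  define P2 where "P2 = d ^ p * b12"
  define Q2 where "Q2 = d ^ p * b22"
  have Bm: "B = mat2 b11 b12 b21 b22" unfolding b11_def b12_def b21_def b22_def by (rule mat2_eta)
  have pz: "(0::'k) ^ p = 0" using p_ge2 by simp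
  have Mcomp: "matrix_inv (mat2 a 0 \<theta> d) ** B ** entrywise_pow (mat2 a 0 \<theta> d) p
     = mat2 (P1 / a) (P2 / a) ((Q1 - P1 * \<theta> / a) / d) ((Q2 - P2 * \<theta> / a) / d)"
    unfolding Bm matrix_inv_tri[OF a0 d0] entrywise_pow_mat2 pz mat2_mult mat2_eq_iff
      P1_def Q1_def P2_def Q2_def
    using a0 d0 by (simp add: field_simps)
  have E: "inR (P1 / a)" "inR (P2 / a)" "inR ((Q1 - P1 * \<theta> / a) / d)" "inR ((Q2 - P2 * \<theta> / a) / d)"
    using int unfolding a_def[symmetric] d_def[symmetric] Mcomp in_M2_mat2 val_ring_inR by blast+
  have conv': "\<phi> P * t1 + \<phi> Q * t2 = \<phi> (P / a) * x1 + \<phi> ((Q - P * \<theta> / a) / d) * x2" for P Q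
    unfolding x1_def x2_def by (rule conv[OF a0 d0])
  have x2p: "x2 ^ p = \<phi> (P2 / a) * x1 + \<phi> ((Q2 - P2 * \<theta> / a) / d) * x2"
  proof -
    have "x2 ^ p = \<phi> (d ^ p) * (\<phi> b12 * t1 + \<phi> b22 * t2)"
      unfolding x2_def phi_pow_mult B2 b12_def b22_def ..
    also have "\<dots> = \<phi> P2 * t1 + \<phi> Q2 * t2"
      unfolding P2_def Q2_def by (simp only: distrib_left phi_left_comm)
    finally show ?thesis using conv' by simp
  qed
  have subrR: "subr (val_ring v)"
    unfolding subr_def using inR_add inR_mult inR_minus by (auto simp: val_ring_inR)
  have x12: "x1 \<noteq> x2"
  proof
    assume "x1 = x2"
    then have "\<phi> a * t1 + \<phi> \<theta> * t2 = \<phi> 0 * t1 + \<phi> d * t2" unfolding x1_def x2_def by simp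
    then show False using coeff_eq a0 by blast
  qed
  have primspan: "\<exists>\<alpha> \<beta>. t = \<phi> \<alpha> * x1 + \<phi> \<beta> * x2" if "t \<in> Prim \<phi> \<Delta>" for t
    using spanP[OF that] conv' by blast
  have hh: "\<phi> u * x1 + \<phi> w * x2 \<in> subalg_gen (\<phi> ` val_ring v) {x1, x2}"
    using h unfolding hopf_order_given_by_def a_def[symmetric] d_def[symmetric] x1_def x2_def by simp
  have fin: "u \<in> val_ring v \<and> w \<in> val_ring v"
    if c: "inR c11" "inR c21" "inR a1" "inR a2"
      and s1p: "x1 ^ p = \<phi> c11 * x1 + \<phi> c21 * x2"
      and s21: "x2 * x1 = x1 * x2 + \<phi> a1 * x1 + \<phi> a2 * x2" for c11 c21 a1 a2
    using order_coords[OF subrR _ _ _ _ _ _ s1p x2p s21 primspan x12 hh] c E unfolding val_ring_inR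
    by blast
  show ?thesis
  proof (cases "t2 * t1 = t1 * t2")
    case comm: True
    have x1p: "x1 ^ p = \<phi> (P1 / a) * x1 + \<phi> ((Q1 - P1 * \<theta> / a) / d) * x2"
    proof -
      have cm: "(\<phi> a * t1) * (\<phi> \<theta> * t2) = (\<phi> \<theta> * t2) * (\<phi> a * t1)"
        by (simp only: pm comm mult.commute)
      have "x1 ^ p = (\<phi> a * t1) ^ p + (\<phi> \<theta> * t2) ^ p"
        unfolding x1_def by (rule comm_frobenius[OF cm prime charH])
      also have "\<dots> = \<phi> (a ^ p) * (\<phi> b11 * t1 + \<phi> b21 * t2) + \<phi> (\<theta> ^ p) * (\<phi> b12 * t1 + \<phi> b22 * t2)"
        unfolding phi_pow_mult B1 B2 b11_def b12_def b21_def b22_def ..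
      also have "\<dots> = \<phi> P1 * t1 + \<phi> Q1 * t2" unfolding lin2 P1_def Q1_def ..
      finally show ?thesis using conv' by simp
    qed
    have "x2 * x1 = x1 * x2"
    proof -
      have "x2 * x1 = \<phi> (d * a) * (t2 * t1) + \<phi> (d * \<theta>) * (t2 * t2)"
        unfolding x1_def x2_def by (simp only: distrib_left pm)
      moreover have "x1 * x2 = \<phi> (a * d) * (t1 * t2) + \<phi> (\<theta> * d) * (t2 * t2)"
        unfolding x1_def x2_def by (simp only: distrib_right pm)
      ultimately show ?thesis using comm by (simp add: mult.commute)
    qed
    then have "x2 * x1 = x1 * x2 + \<phi> 0 * x1 + \<phi> 0 * x2" by simp
    then show ?thesis by (rule fin[OF E(1) E(3) inR_0 inR_0 x1p])
  next
    case False
    have g: "t2 * t1 - t1 * t2 \<noteq> 0" using False by simp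
    obtain \<gamma>1 \<gamma>2 where gexp: "t2 * t1 - t1 * t2 = \<phi> \<gamma>1 * t1 + \<phi> \<gamma>2 * t2"
      using spanP[OF prim_comm[OF t2P t1P]] by blast
    note zp = nonab_zpow[OF g gexp]
    obtain q where q: "p = Suc q" using p_ge2 by (metis Suc_pred less_le_trans numeral_2_eq_2 zero_less_Suc)
    have "t1 ^ p = \<phi> ((- \<gamma>2) ^ q) * t1" using zp[of 1 0] q by simp
    then have "\<phi> b11 * t1 + \<phi> b21 * t2 = \<phi> ((- \<gamma>2) ^ q) * t1 + \<phi> 0 * t2"
      using B1 unfolding b11_def b21_def by simp
    then have b1: "b11 = (- \<gamma>2) ^ q" "b21 = 0" using coeff_eq by blast+
    have "t2 ^ p = \<phi> (\<gamma>1 ^ q) * t2" using zp[of 0 1] q by simp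
    then have "\<phi> b12 * t1 + \<phi> b22 * t2 = \<phi> 0 * t1 + \<phi> (\<gamma>1 ^ q) * t2"
      using B2 unfolding b12_def b22_def by simp
    then have b2: "b12 = 0" "b22 = \<gamma>1 ^ q" using coeff_eq by blast+
    define kx where "kx = \<theta> * \<gamma>1 - a * \<gamma>2"
    have x1p: "x1 ^ p = \<phi> (kx ^ q) * x1 + \<phi> 0 * x2"
      using zp[of a \<theta>] q unfolding x1_def kx_def by simp
    have x21: "x2 * x1 = x1 * x2 + \<phi> (d * \<gamma>1) * x1 + \<phi> (- kx) * x2"
    proof -
      have "x2 * x1 - x1 * x2 = \<phi> (d * a - 0 * \<theta>) * (t2 * t1 - t1 * t2)"
        unfolding x1_def x2_def using comm_lin[of 0 d a \<theta>] by simp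
      also have "\<dots> = \<phi> (d * a * \<gamma>1) * t1 + \<phi> (d * a * \<gamma>2) * t2"
        unfolding gexp by (simp only: distrib_left phi_left_comm mult_zero_left diff_zero)
      also have "\<dots> = \<phi> (d * \<gamma>1) * x1 + \<phi> (- kx) * x2"
      proof -
        have "d * a * \<gamma>1 / a = d * \<gamma>1" using a0 by simp
        moreover have "(d * a * \<gamma>2 - d * a * \<gamma>1 * \<theta> / a) / d = - kx"
          using a0 d0 unfolding kx_def by (simp add: field_simps)
        ultimately show ?thesis using conv'[of "d * a * \<gamma>1" "d * a * \<gamma>2"] by simp
      qed
      finally show ?thesis by (simp add: algebra_simps)
    qed
    have E11: "P1 / a = (a * - \<gamma>2) ^ q"
      unfolding P1_def b1 b2 q using a0 by (simp add: power_mult_distrib[symmetric])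
    have E22: "(Q2 - P2 * \<theta> / a) / d = (d * \<gamma>1) ^ q"
      unfolding P2_def Q2_def b1 b2 q using d0 by (simp add: power_mult_distrib)
    have E21: "(Q1 - P1 * \<theta> / a) / d = \<theta> / d * ((\<theta> * \<gamma>1) ^ q - (a * - \<gamma>2) ^ q)"
      unfolding P1_def Q1_def b1 b2 q power_mult_distrib[of a "- \<gamma>2"] using a0 d0 by (simp add: power_mult_distrib field_simps)
    have q1: "q \<ge> 1" using q p_ge2 by simp
    have R1: "inR (a * - \<gamma>2)" using inR_of_power[OF _ q1] E(1) E11 by simp
    have R2: "inR (d * \<gamma>1)" using inR_of_power[OF _ q1] E(4) E22 by simp
    have R3: "inR (\<theta> * \<gamma>1)"
      using delta_lemma[OF th0 vth d0 vd R1 p_ge2, of "\<theta> * \<gamma>1"] E(3) E21 q by simp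
    have Rk: "inR kx" using inR_add[OF R3 R1] unfolding kx_def by (simp add: algebra_simps)
    show ?thesis
      using fin[OF inR_power[OF Rk] inR_0 R2 inR_minus[OF Rk] x1p x21] by simp
  qed
qed

end


context hset begin

lemma order_incl:
  assumes dv: "normalized_discrete_valuation v" and unif: "\<pi> \<noteq> 0" "v \<pi> = 1"
    and ge: "vK_ge v (\<theta> - \<theta>') j"
  shows "hopf_order_given_by \<phi> (val_ring v) t1 t2 (mat2 a 0 \<theta>' (\<pi> powi j))
       \<subseteq> hopf_order_given_by \<phi> (val_ring v) t1 t2 (mat2 a 0 \<theta> (\<pi> powi j))"
proof -
  interpret dval v by (rule dval.intro[OF dv])
  define d where "d = \<pi> powi j"
  have d0: "d \<noteq> 0" and vd: "v d = j" using unif v_powi[OF unif(1)] unfolding d_def by simp_all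
  define r where "r = (\<theta>' - \<theta>) / d"
  have rR: "inR r"
  proof (cases "\<theta> = \<theta>'")
    case True then show ?thesis unfolding r_def by simp
  next
    case False
    then have "j \<le> v (\<theta> - \<theta>')" using ge unfolding vK_ge_def by simp
    moreover have "v (\<theta>' - \<theta>) = v (\<theta> - \<theta>')" using v_minus[of "\<theta> - \<theta>'"] by simp
    ultimately show ?thesis using False d0 vd unfolding r_def inR_iff by (simp add: v_divide)
  qed
  let ?A = "hopf_order_given_by \<phi> (val_ring v) t1 t2 (mat2 a 0 \<theta> d)"
  have x1: "\<phi> a * t1 + \<phi> \<theta> * t2 \<in> ?A"
    unfolding hopf_order_given_by_def by (rule subalg_gen.gen) simp
  have x2: "\<phi> 0 * t1 + \<phi> d * t2 \<in> ?A"
    unfolding hopf_order_given_by_def by (rule subalg_gen.gen) simp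
  have rA: "\<phi> r \<in> ?A" unfolding hopf_order_given_by_def
    using rR by (intro subalg_gen.base) (simp add: val_ring_inR)
  have E: "\<phi> a * t1 + \<phi> \<theta>' * t2 = (\<phi> a * t1 + \<phi> \<theta> * t2) + \<phi> r * (\<phi> 0 * t1 + \<phi> d * t2)"
  proof -
    have "\<theta>' = \<theta> + r * d" unfolding r_def using d0 by simp
    then show ?thesis by (simp add: distrib_left phi_left_comm phi_add distrib_right add.assoc)
  qed
  have "(\<phi> a * t1 + \<phi> \<theta> * t2) + \<phi> r * (\<phi> 0 * t1 + \<phi> d * t2) \<in> ?A"
    unfolding hopf_order_given_by_def
    by (rule subalg_gen.add[OF x1[unfolded hopf_order_given_by_def]
          subalg_gen.mult[OF rA[unfolded hopf_order_given_by_def] x2[unfolded hopf_order_given_by_def]]])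
  then have x1': "\<phi> a * t1 + \<phi> \<theta>' * t2 \<in> ?A" unfolding E .
  show ?thesis unfolding d_def[symmetric]
  proof
    fix h assume "h \<in> hopf_order_given_by \<phi> (val_ring v) t1 t2 (mat2 a 0 \<theta>' d)"
    then show "h \<in> ?A" unfolding hopf_order_given_by_def
      by (rule subalg_mono_lemma[rotated])
         (use x1' x2 in \<open>auto simp: hopf_order_given_by_def\<close>)
  qed
qed

end

theorem proposition6p4:
  fixes v :: "'k::field \<Rightarrow> int" and p :: nat and \<pi> :: 'k
    and \<phi> :: "'k \<Rightarrow> 'h::ring_1" and \<Delta> :: "'h \<Rightarrow> ('h \<times> 'h) list"
    and \<epsilon> :: "'h \<Rightarrow> 'k" and S :: "'h \<Rightarrow> 'h"
    and t1 t2 :: 'h and B :: "'k ^ 2 ^ 2"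
    and i j i' j' :: int and \<theta> \<theta>' :: 'k
  assumes dvr: "normalized_discrete_valuation v" and complete: "valuation_complete v"
    and char: "prime p" "of_nat p = (0::'k)"
    and unif: "\<pi> \<noteq> 0" "v \<pi> = 1"
    and hopf: "hopf_algebra \<phi> \<Delta> \<epsilon> S"
    and rank: "K_rank \<phi> (p ^ 2)"
    and pg: "primitively_generated \<phi> \<Delta>"
    and basis: "prim_basis \<phi> \<Delta> t1 t2"
    and B1: "t1 ^ p = \<phi> (B $ 1 $ 1) * t1 + \<phi> (B $ 2 $ 1) * t2"
    and B2: "t2 ^ p = \<phi> (B $ 1 $ 2) * t1 + \<phi> (B $ 2 $ 2) * t2"
    and vt: "vK_le v \<theta> j" and vt': "vK_le v \<theta>' j'"
    and int1: "in_M2 (val_ring v)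
       (matrix_inv (mat2 (\<pi> powi i) 0 \<theta> (\<pi> powi j)) ** B **
        entrywise_pow (mat2 (\<pi> powi i) 0 \<theta> (\<pi> powi j)) p)"
    and int2: "in_M2 (val_ring v)
       (matrix_inv (mat2 (\<pi> powi i') 0 \<theta>' (\<pi> powi j')) ** B **
        entrywise_pow (mat2 (\<pi> powi i') 0 \<theta>' (\<pi> powi j')) p)"
  shows "hopf_order_given_by \<phi> (val_ring v) t1 t2 (mat2 (\<pi> powi i) 0 \<theta> (\<pi> powi j)) =
         hopf_order_given_by \<phi> (val_ring v) t1 t2 (mat2 (\<pi> powi i') 0 \<theta>' (\<pi> powi j'))
     \<longleftrightarrow> i = i' \<and> j = j' \<and> vK_ge v (\<theta> - \<theta>') j"
proof -
  interpret hset \<phi> \<Delta> \<epsilon> S p t1 t2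
    by (rule hset.intro) (fact hopf char rank pg basis)+
  interpret dval v by (rule dval.intro[OF dvr])
  have nz: "\<pi> powi i \<noteq> 0" "\<pi> powi j \<noteq> 0" "\<pi> powi i' \<noteq> 0" "\<pi> powi j' \<noteq> 0"
    using unif by simp_all
  have vv: "v (\<pi> powi k) = k" for k
    using v_powi[OF unif(1)] unif(2) by simp
  have memb: "\<phi> (\<Theta> $ 1 $ 1) * t1 + \<phi> (\<Theta> $ 2 $ 1) * t2 \<in> hopf_order_given_by \<phi> (val_ring v) t1 t2 \<Theta>"
    "\<phi> (\<Theta> $ 1 $ 2) * t1 + \<phi> (\<Theta> $ 2 $ 2) * t2 \<in> hopf_order_given_by \<phi> (val_ring v) t1 t2 \<Theta>"
    for \<Theta> unfolding hopf_order_given_by_def by (rule subalg_gen.gen; simp)+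
  have ratio: "k \<le> k'" if "inR (\<pi> powi k' / \<pi> powi k)" for k k'
  proof -
    have "\<pi> powi k' / \<pi> powi k \<noteq> 0" using unif by simp
    then have "0 \<le> v (\<pi> powi k' / \<pi> powi k)" using that unfolding inR_iff by blast
    then show ?thesis using unif by (simp add: v_divide vv)
  qed
  \<comment> \<open>membership of the generators of one order in the other gives integrality\<close>
  have dir: "inR (\<pi> powi ii' / \<pi> powi ii) \<and> inR ((\<theta>2 - \<pi> powi ii' * \<theta>1 / \<pi> powi ii) / \<pi> powi jj)
         \<and> inR (\<pi> powi jj' / \<pi> powi jj)"
    if vt1: "vK_le v \<theta>1 jj"
      and i1: "in_M2 (val_ring v) (matrix_inv (mat2 (\<pi> powi ii) 0 \<theta>1 (\<pi> powi jj)) ** B **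
        entrywise_pow (mat2 (\<pi> powi ii) 0 \<theta>1 (\<pi> powi jj)) p)"
      and sub: "hopf_order_given_by \<phi> (val_ring v) t1 t2 (mat2 (\<pi> powi ii') 0 \<theta>2 (\<pi> powi jj'))
        \<subseteq> hopf_order_given_by \<phi> (val_ring v) t1 t2 (mat2 (\<pi> powi ii) 0 \<theta>1 (\<pi> powi jj))"
    for ii jj ii' jj' \<theta>1 \<theta>2
  proof -
    let ?A = "hopf_order_given_by \<phi> (val_ring v) t1 t2 (mat2 (\<pi> powi ii) 0 \<theta>1 (\<pi> powi jj))"
    have n1: "\<pi> powi ii \<noteq> 0" "\<pi> powi jj \<noteq> 0" using unif by simp_all
    have m1: "\<phi> (\<pi> powi ii') * t1 + \<phi> \<theta>2 * t2 \<in> ?A" using memb(1) sub by fastforce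
    have m2: "\<phi> 0 * t1 + \<phi> (\<pi> powi jj') * t2 \<in> ?A" using memb(2) sub by fastforce
    have r1: "\<pi> powi ii' / \<pi> powi ii \<in> val_ring v \<and> (\<theta>2 - \<pi> powi ii' * \<theta>1 / \<pi> powi ii) / \<pi> powi jj \<in> val_ring v"
      by (rule order_R[OF dvr unif B1 B2 vt1 i1 m1[unfolded conv[OF n1, of "\<pi> powi ii'" "\<theta>2" "\<theta>1"]]])
    have r2: "0 / \<pi> powi ii \<in> val_ring v \<and> (\<pi> powi jj' - 0 * \<theta>1 / \<pi> powi ii) / \<pi> powi jj \<in> val_ring v"
      by (rule order_R[OF dvr unif B1 B2 vt1 i1 m2[unfolded conv[OF n1, of 0 "\<pi> powi jj'" "\<theta>1"]]])
    show ?thesis using r1 r2 unfolding val_ring_inR by simp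
  qed
  show ?thesis
  proof
    assume eq: "hopf_order_given_by \<phi> (val_ring v) t1 t2 (mat2 (\<pi> powi i) 0 \<theta> (\<pi> powi j)) =
         hopf_order_given_by \<phi> (val_ring v) t1 t2 (mat2 (\<pi> powi i') 0 \<theta>' (\<pi> powi j'))"
    have d1: "inR (\<pi> powi i' / \<pi> powi i)" "inR ((\<theta>' - \<pi> powi i' * \<theta> / \<pi> powi i) / \<pi> powi j)"
      "inR (\<pi> powi j' / \<pi> powi j)"
      using dir[OF vt int1] eq by auto
    have d2: "inR (\<pi> powi i / \<pi> powi i')" "inR (\<pi> powi j / \<pi> powi j')"
      using dir[OF vt' int2] eq by auto
    have ii: "i = i'" using ratio[OF d1(1)] ratio[OF d2(1)] by simp
    have jj: "j = j'" using ratio[OF d1(3)] ratio[OF d2(2)] by simp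
    have "inR ((\<theta>' - \<theta>) / \<pi> powi j)" using d1(2) ii unif by simp
    then have "vK_ge v (\<theta> - \<theta>') j"
    proof (cases "\<theta> = \<theta>'")
      case True then show ?thesis by (simp add: vK_ge_def)
    next
      case False
      assume r: "inR ((\<theta>' - \<theta>) / \<pi> powi j)"
      have "(\<theta>' - \<theta>) / \<pi> powi j \<noteq> 0" using False unif by simp
      then have "0 \<le> v (\<theta>' - \<theta>) - j" using r False nz unif(1) unfolding inR_iff by (simp add: v_divide vv)
      moreover have "v (\<theta>' - \<theta>) = v (\<theta> - \<theta>')" using v_minus[of "\<theta> - \<theta>'"] by simp
      ultimately show ?thesis unfolding vK_ge_def by simp
    qed
    then show "i = i' \<and> j = j' \<and> vK_ge v (\<theta> - \<theta>') j" using ii jj by simp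
  next
    assume "i = i' \<and> j = j' \<and> vK_ge v (\<theta> - \<theta>') j"
    then have h: "i = i'" "j = j'" "vK_ge v (\<theta> - \<theta>') j" by auto
    have h': "vK_ge v (\<theta>' - \<theta>) j" using h(3) v_minus[of "\<theta> - \<theta>'"] unfolding vK_ge_def by auto
    show "hopf_order_given_by \<phi> (val_ring v) t1 t2 (mat2 (\<pi> powi i) 0 \<theta> (\<pi> powi j)) =
         hopf_order_given_by \<phi> (val_ring v) t1 t2 (mat2 (\<pi> powi i') 0 \<theta>' (\<pi> powi j'))"
      unfolding h(1)[symmetric] h(2)[symmetric]
      using order_incl[OF dvr unif h(3), of "\<pi> powi i"] order_incl[OF dvr unif h', of "\<pi> powi i"]
      by blast
  qed
qed


end
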